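(* Let $\rho$ be a density matrix on $\mathcal{H}_{m_A}\otimes\mathcal{H}_{m_B}$. The following are equivalent: (i) there exist projections $P_A:\mathcal{H}_{m_A}\to\mathcal{H}_2$ and $P_B:\mathcal{H}_{m_B}\to\mathcal{H}_2$ such that $(P_A\otimes P_B)\rho(P_A^\dagger\otimes P_B^\dagger)$ is entangled; (ii) there exists a projection $P_A:\mathcal{H}_{m_A}\to\mathcal{H}_2$ such that $\rho_{2\otimes m_B}=(P_A\otimes\mathbf{1}_B)\rho(P_A^\dagger\otimes\mathbf{1}_B)$ satisfies $\rho_{2\otimes m_B}^{PT}\not\ge0$; (iii) there exists a vector $|\phi\rangle\in\mathcal{H}_{m_A}\otimes\mathcal{H}_{m_B}$ of Schmidt rank two with $\langle\phi|\rho^{PT}|\phi\rangle<0$.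
   Context: $\mathcal{H}_k$ denotes a $k$-dimensional Hilbert space. A projection $P:\mathcal{H}_m\to\mathcal{H}_2$ means a map of the form $P=|0\rangle\langle\alpha_0|+|1\rangle\langle\alpha_1|$ with $|\alpha_0\rangle,|\alpha_1\rangle$ orthonormal. A bipartite (possibly unnormalized) positive operator is entangled if it is not separable, i.e. not a nonnegative combination of products $|\alpha\rangle\langle\alpha|\otimes|\beta\rangle\langle\beta|$. $\rho^{PT}$ denotes the partial transpose on the second (Bob's) factor: $\langle ij|\rho^{PT}|kl\rangle=\langle il|\rho|kj\rangle$. A vector has Schmidt rank $k$ if its Schmidt decomposition has exactly $k$ nonzero terms. *)

theory Defs
  imports Complex_Main "HOL-Library.Numeral_Type" "HOL-Library.Complex_Order"
begin

text \<open>Operators between finite-dimensional Hilbert spaces are represented by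
their matrices w.r.t. the computational bases, indexed by finite types:
an operator from the space indexed by 'y to the space indexed by 'x is a
function M :: 'x => 'y => complex with M x y = <x|M|y>.  H_2 is indexed by the type 2; a bipartite space by a pair type.\<close>

type_synonym ('x, 'y) op = "'x \<Rightarrow> 'y \<Rightarrow> complex"

definition inner_c :: "('x::finite \<Rightarrow> complex) \<Rightarrow> ('x \<Rightarrow> complex) \<Rightarrow> complex" where
  "inner_c u v = (\<Sum>x\<in>UNIV. cnj (u x) * v x)"

definition expval :: "('x::finite, 'x) op \<Rightarrow> ('x \<Rightarrow> complex) \<Rightarrow> complex" where
  "expval A v = (\<Sum>x\<in>UNIV. \<Sum>y\<in>UNIV. cnj (v x) * A x y * v y)"

definition psd :: "('x::finite, 'x) op \<Rightarrow> bool" where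
  "psd A \<longleftrightarrow> (\<forall>v. 0 \<le> expval A v)"

definition trace_c :: "('x::finite, 'x) op \<Rightarrow> complex" where
  "trace_c A = (\<Sum>x\<in>UNIV. A x x)"

definition density_matrix :: "('x::finite, 'x) op \<Rightarrow> bool" where
  "density_matrix \<rho> \<longleftrightarrow> psd \<rho> \<and> trace_c \<rho> = 1"

definition orthonormal2 :: "('x::finite \<Rightarrow> complex) \<Rightarrow> ('x \<Rightarrow> complex) \<Rightarrow> bool" where
  "orthonormal2 a0 a1 \<longleftrightarrow> inner_c a0 a0 = 1 \<and> inner_c a1 a1 = 1 \<and> inner_c a0 a1 = 0"

text \<open>The projection P = |0><a0| + |1><a1| : H_m -> H_2.\<close>
definition proj2 :: "('x \<Rightarrow> complex) \<Rightarrow> ('x \<Rightarrow> complex) \<Rightarrow> (2, 'x) op" where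
  "proj2 a0 a1 = (\<lambda>i x. if i = 0 then cnj (a0 x) else cnj (a1 x))"

definition is_projection :: "(2, 'x::finite) op \<Rightarrow> bool" where
  "is_projection P \<longleftrightarrow> (\<exists>a0 a1. orthonormal2 a0 a1 \<and> P = proj2 a0 a1)"

definition tensor_op :: "('x, 'y) op \<Rightarrow> ('u, 'w) op \<Rightarrow> ('x \<times> 'u, 'y \<times> 'w) op" where
  "tensor_op M N = (\<lambda>(x, u) (y, w). M x y * N u w)"

definition id_op :: "('x, 'x) op" where
  "id_op = (\<lambda>x y. if x = y then 1 else 0)"

definition sandwich :: "('x, 'y::finite) op \<Rightarrow> ('y, 'y) op \<Rightarrow> ('x, 'x) op" where
  "sandwich M \<rho> = (\<lambda>x x'. \<Sum>y\<in>UNIV. \<Sum>y'\<in>UNIV. M x y * \<rho> y y' * cnj (M x' y'))"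

definition partial_transpose :: "('a \<times> 'b, 'a \<times> 'b) op \<Rightarrow> ('a \<times> 'b, 'a \<times> 'b) op" where
  "partial_transpose \<rho> = (\<lambda>(i, j) (k, l). \<rho> (i, l) (k, j))"

definition separable :: "('a \<times> 'b, 'a \<times> 'b) op \<Rightarrow> bool" where
  "separable \<rho> \<longleftrightarrow> (\<exists>(n::nat) (c::nat \<Rightarrow> real) (a::nat \<Rightarrow> 'a \<Rightarrow> complex) (b::nat \<Rightarrow> 'b \<Rightarrow> complex).
      (\<forall>t<n. 0 \<le> c t) \<and>
      \<rho> = (\<lambda>(i, k) (j, l). \<Sum>t<n. complex_of_real (c t) * a t i * cnj (a t j) * b t k * cnj (b t l)))"

definition entangled :: "('a::finite \<times> 'b::finite, 'a \<times> 'b) op \<Rightarrow> bool" where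
  "entangled \<rho> \<longleftrightarrow> psd \<rho> \<and> \<not> separable \<rho>"

definition schmidt_rank :: "nat \<Rightarrow> ('a::finite \<times> 'b::finite \<Rightarrow> complex) \<Rightarrow> bool" where
  "schmidt_rank k \<phi> \<longleftrightarrow> (\<exists>(s::nat \<Rightarrow> real) (a::nat \<Rightarrow> 'a \<Rightarrow> complex) (b::nat \<Rightarrow> 'b \<Rightarrow> complex).
      (\<forall>t<k. 0 < s t) \<and>
      (\<forall>t<k. \<forall>t'<k. inner_c (a t) (a t') = (if t = t' then 1 else 0)) \<and>
      (\<forall>t<k. \<forall>t'<k. inner_c (b t) (b t') = (if t = t' then 1 else 0)) \<and>
      \<phi> = (\<lambda>(i, j). \<Sum>t<k. complex_of_real (s t) * a t i * b t j))"

end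

theory Submission
  imports Defs
begin

lemma two_cases: "(x::2) = 0 \<or> x = 1"
proof (cases x)
  case (of_int z)
  then have "z = 0 \<or> z = 1" by auto
  then show ?thesis using of_int by auto
qed

lemma UNIV_2: "(UNIV :: 2 set) = {0, 1}"
  using two_cases by auto

lemma sum2: "(\<Sum>x\<in>(UNIV::2 set). f x) = f 0 + f 1"
  by (simp add: UNIV_2)

lemma sum_prod_UNIV: "(\<Sum>x\<in>(UNIV::('a::finite\<times>'b::finite) set). f x) = (\<Sum>i\<in>UNIV. \<Sum>j\<in>UNIV. f (i,j))"
  by (simp add: sum.cartesian_product)

definition mmul :: "('x, 'y::finite) op \<Rightarrow> ('y, 'z) op \<Rightarrow> ('x, 'z) op" where
  "mmul M N = (\<lambda>x z. \<Sum>y\<in>UNIV. M x y * N y z)"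

definition dag :: "('x, 'y) op \<Rightarrow> ('y, 'x) op" where
  "dag M = (\<lambda>y x. cnj (M x y))"

definition app :: "('x, 'y::finite) op \<Rightarrow> ('y \<Rightarrow> complex) \<Rightarrow> ('x \<Rightarrow> complex)" where
  "app M v = (\<lambda>x. \<Sum>y\<in>UNIV. M x y * v y)"

definition outer :: "('x \<Rightarrow> complex) \<Rightarrow> ('y \<Rightarrow> complex) \<Rightarrow> ('x, 'y) op" where
  "outer u v = (\<lambda>x y. u x * cnj (v y))"

definition tensv :: "('a \<Rightarrow> complex) \<Rightarrow> ('b \<Rightarrow> complex) \<Rightarrow> ('a \<times> 'b \<Rightarrow> complex)" where
  "tensv a b = (\<lambda>(i, j). a i * b j)"

definition conjv :: "('x \<Rightarrow> complex) \<Rightarrow> ('x \<Rightarrow> complex)" where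
  "conjv v = (\<lambda>x. cnj (v x))"

definition conjop :: "('x, 'y) op \<Rightarrow> ('x, 'y) op" where
  "conjop M = (\<lambda>x y. cnj (M x y))"

lemma expval_inner: "expval A v = inner_c v (app A v)"
  by (simp add: expval_def inner_c_def app_def sum_distrib_left mult.assoc)

lemma app_dag: "app (dag M) v = (\<lambda>y. \<Sum>x\<in>UNIV. cnj (M x y) * v x)"
  by (simp add: app_def dag_def)

lemma swap4: "(\<Sum>x\<in>A. \<Sum>x'\<in>B. \<Sum>y\<in>C. \<Sum>y'\<in>D. f x x' y y') = (\<Sum>y\<in>C. \<Sum>y'\<in>D. \<Sum>x\<in>A. \<Sum>x'\<in>B. f x x' y y')"
proof -
  have "(\<Sum>x\<in>A. \<Sum>x'\<in>B. \<Sum>y\<in>C. \<Sum>y'\<in>D. f x x' y y') = (\<Sum>x\<in>A. \<Sum>y\<in>C. \<Sum>x'\<in>B. \<Sum>y'\<in>D. f x x' y y')"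
    by (rule sum.cong[OF refl], rule sum.swap)
  also have "\<dots> = (\<Sum>x\<in>A. \<Sum>y\<in>C. \<Sum>y'\<in>D. \<Sum>x'\<in>B. f x x' y y')"
    by (rule sum.cong[OF refl], rule sum.cong[OF refl], rule sum.swap)
  also have "\<dots> = (\<Sum>y\<in>C. \<Sum>x\<in>A. \<Sum>y'\<in>D. \<Sum>x'\<in>B. f x x' y y')"
    by (rule sum.swap)
  also have "\<dots> = (\<Sum>y\<in>C. \<Sum>y'\<in>D. \<Sum>x\<in>A. \<Sum>x'\<in>B. f x x' y y')"
    by (rule sum.cong[OF refl], rule sum.swap)
  finally show ?thesis .
qed

lemma expval_sandwich: "expval (sandwich M \<rho>) v = expval \<rho> (app (dag M) v)"
proof -
  have "expval (sandwich M \<rho>) v =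
    (\<Sum>x\<in>UNIV. \<Sum>x'\<in>UNIV. \<Sum>y\<in>UNIV. \<Sum>y'\<in>UNIV. (cnj (v x) * M x y) * \<rho> y y' * (cnj (M x' y') * v x'))"
    by (simp add: expval_def sandwich_def sum_distrib_left sum_distrib_right mult.assoc)
  also have "\<dots> = (\<Sum>y\<in>UNIV. \<Sum>y'\<in>UNIV. \<Sum>x\<in>UNIV. \<Sum>x'\<in>UNIV. (cnj (v x) * M x y) * \<rho> y y' * (cnj (M x' y') * v x'))"
    by (rule swap4)
  also have "\<dots> = expval \<rho> (app (dag M) v)"
    unfolding expval_def app_dag
    apply (rule sum.cong[OF refl])+
    by (simp add: sum_distrib_left sum_distrib_right mult_ac cnj_sum)
  finally show ?thesis .
qed

lemma psd_sandwich: "psd \<rho> \<Longrightarrow> psd (sandwich M \<rho>)"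
  by (simp add: psd_def expval_sandwich)


lemma sum_cnj_mult_self: "cnj z * z = complex_of_real ((cmod z)^2)"
  using complex_norm_square[of z] by (simp add: mult.commute)

lemma cmod_sq_nonneg: "0 \<le> cnj z * z"
  by (auto simp: less_eq_complex_def)

definition bvec :: "'x \<Rightarrow> ('x \<Rightarrow> complex)" where
  "bvec x = (\<lambda>z. if z = x then 1 else 0)"

lemma cnj_bvec[simp]: "cnj (bvec x u) = bvec x u"
  by (simp add: bvec_def)

lemma sum_bvec_r[simp]: "(\<Sum>u\<in>UNIV. f u * bvec x u) = f (x::'x::finite)"
proof -
  have "(\<Sum>u\<in>UNIV. f u * bvec x u) = (\<Sum>u\<in>UNIV. if u = x then f x else 0)"
    by (rule sum.cong) (auto simp: bvec_def)
  also have "\<dots> = f x" by simp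
  finally show ?thesis .
qed

lemma sum_bvec_l[simp]: "(\<Sum>u\<in>UNIV. bvec x u * f u) = f (x::'x::finite)"
  using sum_bvec_r[of f x] by (simp add: mult.commute)

lemma sum_bvec_r2[simp]: "(\<Sum>u\<in>UNIV. f u * (c * bvec x u)) = f (x::'x::finite) * c"
proof -
  have "(\<Sum>u\<in>UNIV. f u * (c * bvec x u)) = (\<Sum>u\<in>UNIV. (f u * c) * bvec x u)"
    by (simp only: mult.assoc)
  then show ?thesis by simp
qed

lemma app_two: "app A (\<lambda>z. a * bvec x z + b * bvec y z) = (\<lambda>u. A u x * a + A u y * b)"
  unfolding app_def by (simp only: distrib_left sum.distrib sum_bvec_r2)

lemma sum_bvec_l2[simp]: "(\<Sum>u\<in>UNIV. (c * bvec x u) * f u) = c * f (x::'x::finite)"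
proof -
  have "(\<Sum>u\<in>UNIV. (c * bvec x u) * f u) = (\<Sum>u\<in>UNIV. (f u * c) * bvec x u)"
    by (simp only: mult_ac)
  then show ?thesis by (simp add: mult.commute)
qed

lemma inner_two: "inner_c (\<lambda>z. a * bvec x z + b * bvec y z) w = cnj a * w x + cnj b * w (y::'x::finite)"
proof -
  have "inner_c (\<lambda>z. a * bvec x z + b * bvec y z) w = (\<Sum>u\<in>UNIV. (cnj a * bvec x u + cnj b * bvec y u) * w u)"
    unfolding inner_c_def by simp
  then show ?thesis by (simp only: distrib_right sum.distrib sum_bvec_l2)
qed

lemma expval_two:
  fixes A :: "('x::finite, 'x) op"
  shows "expval A (\<lambda>z. a * bvec x z + b * bvec y z) =
     cnj a * A x x * a + cnj a * A x y * b + cnj b * A y x * a + cnj b * A y y * b"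
  unfolding expval_inner app_two inner_two by (simp add: algebra_simps)

lemma expval_bvec: "expval A (bvec x) = A x x"
  by (simp add: expval_def)

lemma psd_diag: "psd A \<Longrightarrow> 0 \<le> A x x"
  unfolding psd_def by (metis expval_bvec)

lemma psd_herm:
  fixes A :: "('x::finite, 'x) op"
  assumes "psd A"
  shows "A x y = cnj (A y x)"
proof (cases "x = y")
  case True
  then show ?thesis using psd_diag[OF assms, of x]
    by (simp add: complex_eq_iff less_eq_complex_def)
next
  case False
  have dx: "Im (A x x) = 0" and dy: "Im (A y y) = 0"
    using psd_diag[OF assms] by (auto simp: less_eq_complex_def)
  have "0 \<le> expval A (\<lambda>z. 1 * bvec x z + 1 * bvec y z)" using assms psd_def by blast
  then have h1: "Im (A x y + A y x) = 0"
    using dx dy by (simp only: expval_two) (simp add: less_eq_complex_def)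
  have "0 \<le> expval A (\<lambda>z. 1 * bvec x z + \<i> * bvec y z)" using assms psd_def by blast
  then have h2: "Re (A x y) = Re (A y x)"
    using dx dy by (simp only: expval_two) (simp add: less_eq_complex_def)
  show ?thesis using h1 h2 by (simp add: complex_eq_iff)
qed

lemma psd_zero_diag:
  fixes A :: "('x::finite, 'x) op"
  assumes "psd A" and "A x x = 0"
  shows "A x y = 0"
proof (cases "x = y")
  case True then show ?thesis using assms by simp
next
  case False
  define c where "c = A x y"
  have hyx: "A y x = cnj c" using psd_herm[OF assms(1), of y x] c_def by simp
  have dy: "Im (A y y) = 0" "0 \<le> Re (A y y)" using psd_diag[OF assms(1), of y] by (auto simp: less_eq_complex_def)
  define t :: real where "t = (Re (A y y) + 1) / (2 * (cmod c)^2)"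
  show ?thesis
  proof (rule ccontr)
    assume "A x y \<noteq> 0"
    then have cpos: "0 < (cmod c)^2" using c_def by simp
    have "0 \<le> expval A (\<lambda>z. (- of_real t * c) * bvec x z + 1 * bvec y z)" using assms psd_def by blast
    also have "expval A (\<lambda>z. (- of_real t * c) * bvec x z + 1 * bvec y z) =
       cnj (- of_real t * c) * A x x * (- of_real t * c) + cnj (- of_real t * c) * A x y * 1 + cnj 1 * A y x * (- of_real t * c) + cnj 1 * A y y * 1"
      by (rule expval_two)
    also have "\<dots> = - of_real t * (cnj c * c) - of_real t * (cnj c * c) + A y y"
      using assms(2) hyx c_def by (simp add: algebra_simps)
    finally have "0 \<le> Re (- of_real t * (cnj c * c) - of_real t * (cnj c * c) + A y y)"
      by (simp add: less_eq_complex_def)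
    then have "0 \<le> - 2 * t * (cmod c)^2 + Re (A y y)"
      by (simp add: sum_cnj_mult_self)
    moreover have "2 * t * (cmod c)^2 = Re (A y y) + 1" using cpos by (simp add: t_def)
    ultimately show False by simp
  qed
qed

lemma psd_add: "psd A \<Longrightarrow> psd B \<Longrightarrow> psd (\<lambda>x y. A x y + B x y)"
  unfolding psd_def expval_def by (simp add: distrib_left distrib_right sum.distrib add_nonneg_nonneg)

lemma expval_scale: "expval (\<lambda>x y. c * A x y) v = c * expval A v"
  unfolding expval_def by (simp add: sum_distrib_left mult_ac)

lemma psd_scale: "psd A \<Longrightarrow> 0 \<le> c \<Longrightarrow> psd (\<lambda>x y. complex_of_real c * A x y)"
  unfolding psd_def by (auto simp: expval_scale less_eq_complex_def intro!: mult_nonneg_nonneg)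

lemma expval_outer: "expval (outer u u) v = cnj (inner_c u v) * inner_c u v"
  unfolding expval_def outer_def inner_c_def
  apply (simp add: sum_distrib_left sum_distrib_right cnj_sum)
  apply (subst sum.swap)
  by (simp add: mult_ac)

lemma psd_outer: "psd (outer u u)"
  unfolding psd_def expval_outer by (simp add: cmod_sq_nonneg)

lemma psd_zero: "psd (\<lambda>x y. 0)"
  by (simp add: psd_def expval_def)

lemma swap3: "(\<Sum>x\<in>A. \<Sum>y\<in>B. \<Sum>z\<in>C. f x y z) = (\<Sum>z\<in>C. \<Sum>y\<in>B. \<Sum>x\<in>A. f x y z)"
proof -
  have "(\<Sum>x\<in>A. \<Sum>y\<in>B. \<Sum>z\<in>C. f x y z) = (\<Sum>y\<in>B. \<Sum>x\<in>A. \<Sum>z\<in>C. f x y z)"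
    by (rule sum.swap)
  also have "\<dots> = (\<Sum>y\<in>B. \<Sum>z\<in>C. \<Sum>x\<in>A. f x y z)"
    by (rule sum.cong[OF refl], rule sum.swap)
  also have "\<dots> = (\<Sum>z\<in>C. \<Sum>y\<in>B. \<Sum>x\<in>A. f x y z)"
    by (rule sum.swap)
  finally show ?thesis .
qed

lemma swap3b: "(\<Sum>x\<in>A. \<Sum>y\<in>B. \<Sum>z\<in>C. f x y z) = (\<Sum>z\<in>C. \<Sum>x\<in>A. \<Sum>y\<in>B. f x y z)"
proof -
  have "(\<Sum>x\<in>A. \<Sum>y\<in>B. \<Sum>z\<in>C. f x y z) = (\<Sum>x\<in>A. \<Sum>z\<in>C. \<Sum>y\<in>B. f x y z)"
    by (rule sum.cong[OF refl], rule sum.swap)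
  also have "\<dots> = (\<Sum>z\<in>C. \<Sum>x\<in>A. \<Sum>y\<in>B. f x y z)"
    by (rule sum.swap)
  finally show ?thesis .
qed

lemma op_eqI:
  fixes f g :: "('a \<times> 'b, 'c \<times> 'd) op"
  assumes "\<And>i j k l. f (i, j) (k, l) = g (i, j) (k, l)"
  shows "f = g"
  using assms by (intro ext) auto

lemma pt_apply[simp]: "partial_transpose \<rho> (i, j) (k, l) = \<rho> (i, l) (k, j)"
  by (simp add: partial_transpose_def)

lemma tensor_apply[simp]: "tensor_op M N (x, u) (y, w) = M x y * N u w"
  by (simp add: tensor_op_def)

lemma tensv_apply[simp]: "tensv a b (i, j) = a i * b j"
  by (simp add: tensv_def)

lemma pt_pt[simp]: "partial_transpose (partial_transpose \<rho>) = \<rho>"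
  by (rule op_eqI) simp

lemma sandwich_sandwich: "sandwich M (sandwich M' \<rho>) = sandwich (mmul M M') \<rho>"
proof (intro ext)
  fix x x'
  have "sandwich M (sandwich M' \<rho>) x x' = (\<Sum>y\<in>UNIV. \<Sum>y'\<in>UNIV. \<Sum>z\<in>UNIV. \<Sum>z'\<in>UNIV.
      M x y * M' y z * \<rho> z z' * cnj (M' y' z') * cnj (M x' y'))"
    by (simp add: sandwich_def sum_distrib_left sum_distrib_right mult_ac)
  also have "\<dots> = (\<Sum>z\<in>UNIV. \<Sum>z'\<in>UNIV. \<Sum>y\<in>UNIV. \<Sum>y'\<in>UNIV.
      M x y * M' y z * \<rho> z z' * cnj (M' y' z') * cnj (M x' y'))"
    by (rule swap4)
  also have "\<dots> = sandwich (mmul M M') \<rho> x x'"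
    by (simp add: sandwich_def mmul_def sum_distrib_left sum_distrib_right mult_ac)
  finally show "sandwich M (sandwich M' \<rho>) x x' = sandwich (mmul M M') \<rho> x x'" .
qed

lemma mmul_tensor: "mmul (tensor_op M N) (tensor_op M' N') = tensor_op (mmul M M') (mmul N N')"
  by (rule op_eqI) (simp add: mmul_def sum_prod_UNIV sum_product mult_ac)

lemma id_op_bvec: "id_op x = bvec x" "(\<lambda>y. id_op y x) = bvec x"
  by (auto simp: id_op_def bvec_def fun_eq_iff)

lemma sandwich_id: "sandwich id_op \<rho> = (\<rho> :: ('x::finite, 'x) op)"
  by (intro ext) (simp add: sandwich_def id_op_bvec(1))

lemma tensor_id: "tensor_op (id_op :: ('a,'a) op) (id_op :: ('b,'b) op) = id_op"
  by (rule op_eqI) (simp add: id_op_def)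

lemma mmul_id_left: "mmul id_op M = (M :: ('x::finite, 'y) op)"
  by (intro ext) (simp add: mmul_def id_op_bvec)

lemma mmul_id_right: "mmul M id_op = (M :: ('x, 'y::finite) op)"
  by (intro ext) (simp add: mmul_def id_op_def bvec_def if_distrib cong: if_cong)

lemma pt_sandwich:
  fixes \<rho> :: "('a::finite \<times> 'b::finite, 'a \<times> 'b) op"
  shows "partial_transpose (sandwich (tensor_op M N) \<rho>) = sandwich (tensor_op M (conjop N)) (partial_transpose \<rho>)"
proof (rule op_eqI)
  fix i j k l
  have L: "partial_transpose (sandwich (tensor_op M N) \<rho>) (i, j) (k, l) =
    (\<Sum>a\<in>UNIV. \<Sum>b\<in>UNIV. \<Sum>c\<in>UNIV. \<Sum>d\<in>UNIV. M i a * N l b * \<rho> (a, b) (c, d) * cnj (M k c) * cnj (N j d))"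
    by (simp add: sandwich_def sum_prod_UNIV sum_distrib_left sum_distrib_right mult_ac)
  have R: "sandwich (tensor_op M (conjop N)) (partial_transpose \<rho>) (i, j) (k, l) =
    (\<Sum>a\<in>UNIV. \<Sum>b\<in>UNIV. \<Sum>c\<in>UNIV. \<Sum>d\<in>UNIV. M i a * cnj (N j b) * \<rho> (a, d) (c, b) * cnj (M k c) * N l d)"
    by (simp add: sandwich_def sum_prod_UNIV sum_distrib_left sum_distrib_right mult_ac conjop_def)
  have X: "(\<Sum>b\<in>UNIV. \<Sum>c\<in>UNIV. \<Sum>d\<in>UNIV. M i a * cnj (N j b) * \<rho> (a, d) (c, b) * cnj (M k c) * N l d) =
     (\<Sum>d\<in>UNIV. \<Sum>c\<in>UNIV. \<Sum>b\<in>UNIV. M i a * cnj (N j b) * \<rho> (a, d) (c, b) * cnj (M k c) * N l d)" for a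
    by (rule swap3)
  show "partial_transpose (sandwich (tensor_op M N) \<rho>) (i, j) (k, l) =
      sandwich (tensor_op M (conjop N)) (partial_transpose \<rho>) (i, j) (k, l)"
    unfolding L R X by (simp add: mult_ac)
qed

lemma app_tensor: "app (tensor_op M N) (tensv a b) = tensv (app M a) (app N b)"
  by (intro ext) (auto simp: app_def sum_prod_UNIV sum_product mult_ac)

lemma sandwich_outer_sum:
  "sandwich T (\<lambda>x y. \<Sum>t\<in>S. c t * outer (u t) (u t) x y) =
   (\<lambda>x y. \<Sum>t\<in>S. c t * outer (app T (u t)) (app T (u t)) x y)"
proof (intro ext)
  fix x x'
  have "sandwich T (\<lambda>x y. \<Sum>t\<in>S. c t * outer (u t) (u t) x y) x x' =
     (\<Sum>y\<in>UNIV. \<Sum>y'\<in>UNIV. \<Sum>t\<in>S. c t * (T x y * u t y) * cnj (T x' y' * u t y'))"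
    by (simp add: sandwich_def outer_def sum_distrib_left sum_distrib_right mult_ac)
  also have "\<dots> = (\<Sum>t\<in>S. \<Sum>y\<in>UNIV. \<Sum>y'\<in>UNIV. c t * (T x y * u t y) * cnj (T x' y' * u t y'))"
    by (rule swap3b)
  also have "\<dots> = (\<Sum>t\<in>S. c t * outer (app T (u t)) (app T (u t)) x x')"
    apply (simp add: outer_def app_def sum_distrib_left sum_distrib_right mult_ac cnj_sum)
    apply (rule sum.cong[OF refl])
    by (rule sum.swap)
  finally show "sandwich T (\<lambda>x y. \<Sum>t\<in>S. c t * outer (u t) (u t) x y) x x' =
     (\<Sum>t\<in>S. c t * outer (app T (u t)) (app T (u t)) x x')" .
qed

definition sepsum :: "nat \<Rightarrow> (nat \<Rightarrow> real) \<Rightarrow> (nat \<Rightarrow> 'a \<Rightarrow> complex) \<Rightarrow> (nat \<Rightarrow> 'b \<Rightarrow> complex) \<Rightarrow> ('a \<times> 'b, 'a \<times> 'b) op" where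
  "sepsum n c a b = (\<lambda>x y. \<Sum>t<n. complex_of_real (c t) * outer (tensv (a t) (b t)) (tensv (a t) (b t)) x y)"

lemma separable_alt: "separable \<rho> \<longleftrightarrow> (\<exists>n c a b. (\<forall>t<n. 0 \<le> c t) \<and> \<rho> = sepsum n c a b)"
proof -
  have "\<And>n c a b. (\<lambda>(i, k) (j, l). \<Sum>t<n. complex_of_real (c t) * a t i * cnj (a t j) * b t k * cnj (b t l)) = sepsum n c a b"
    by (rule op_eqI) (simp add: sepsum_def outer_def mult_ac)
  then show ?thesis unfolding separable_def by metis
qed

lemma sepsum_0: "sepsum 0 c a b = (\<lambda>x y. 0)"
  by (simp add: sepsum_def)

lemma sepsum_Suc: "sepsum (Suc n) c a b = (\<lambda>x y. sepsum n c a b x y + complex_of_real (c n) * outer (tensv (a n) (b n)) (tensv (a n) (b n)) x y)"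
  by (simp add: sepsum_def)

lemma sep_zero: "separable (\<lambda>x y. 0)"
  unfolding separable_alt by (rule exI[of _ 0]) (simp add: sepsum_0)

lemma sep_add_prod:
  assumes "separable A" and "0 \<le> c0"
  shows "separable (\<lambda>x y. A x y + complex_of_real c0 * outer (tensv a0 b0) (tensv a0 b0) x y)"
proof -
  obtain n c a b where h: "\<forall>t<n. 0 \<le> c t" "A = sepsum n c a b" using assms(1) separable_alt by metis
  have "sepsum (Suc n) (c(n := c0)) (a(n := a0)) (b(n := b0)) = (\<lambda>x y. A x y + complex_of_real c0 * outer (tensv a0 b0) (tensv a0 b0) x y)"
    unfolding sepsum_Suc h(2) by (simp add: sepsum_def)
  moreover have "\<forall>t<Suc n. 0 \<le> (c(n := c0)) t" using h(1) assms(2) by (simp add: less_Suc_eq)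
  ultimately show ?thesis unfolding separable_alt by metis
qed

lemma sep_add:
  assumes "separable A" and "separable B"
  shows "separable (\<lambda>x y. A x y + B x y)"
proof -
  obtain n c a b where h: "\<forall>t<n. 0 \<le> c t" "B = sepsum n c a b" using assms(2) separable_alt by metis
  have "\<forall>t<n. 0 \<le> c t \<Longrightarrow> separable (\<lambda>x y. A x y + sepsum n c a b x y)"
  proof (induction n)
    case 0 then show ?case using assms(1) by (simp add: sepsum_0)
  next
    case (Suc n)
    have "separable (\<lambda>x y. (A x y + sepsum n c a b x y) + complex_of_real (c n) * outer (tensv (a n) (b n)) (tensv (a n) (b n)) x y)"
      using Suc by (intro sep_add_prod) auto
    then show ?case by (simp add: sepsum_Suc add.assoc)
  qed
  then show ?thesis using h by simp
qed

lemma sep_prod: "0 \<le> c0 \<Longrightarrow> separable (\<lambda>x y. complex_of_real c0 * outer (tensv a0 b0) (tensv a0 b0) x y)"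
  using sep_add_prod[OF sep_zero] by simp

lemma sep_prod1: "separable (outer (tensv a0 b0) (tensv a0 b0))"
  using sep_prod[of 1 a0 b0] by simp

lemma sep_sandwich:
  assumes "separable \<rho>"
  shows "separable (sandwich (tensor_op M N) \<rho>)"
proof -
  obtain n c a b where h: "\<forall>t<n. 0 \<le> c t" "\<rho> = sepsum n c a b" using assms separable_alt by metis
  have "sandwich (tensor_op M N) \<rho> = sepsum n c (\<lambda>t. app M (a t)) (\<lambda>t. app N (b t))"
    unfolding h(2) sepsum_def sandwich_outer_sum app_tensor ..
  then show ?thesis using h(1) separable_alt by metis
qed

lemma sep_pt:
  assumes "separable \<rho>"
  shows "separable (partial_transpose \<rho>)"
proof -
  obtain n c a b where h: "\<forall>t<n. 0 \<le> c t" "\<rho> = sepsum n c a b" using assms separable_alt by metis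
  have "partial_transpose \<rho> = sepsum n c a (\<lambda>t. conjv (b t))"
    unfolding h(2) by (rule op_eqI) (simp add: sepsum_def outer_def conjv_def mult_ac)
  then show ?thesis using h(1) separable_alt by metis
qed

lemma sep_psd:
  fixes \<rho> :: "('a::finite \<times> 'b::finite, 'a \<times> 'b) op"
  assumes "separable \<rho>"
  shows "psd \<rho>"
proof -
  obtain n c a b where h: "\<forall>t<n. 0 \<le> c t" "\<rho> = sepsum n c a b" using assms separable_alt by metis
  have "\<forall>t<n. 0 \<le> c t \<Longrightarrow> psd (sepsum n c a b)"
  proof (induction n)
    case 0 then show ?case by (simp add: sepsum_0 psd_zero)
  next
    case (Suc n) then show ?case unfolding sepsum_Suc
      by (intro psd_add psd_scale psd_outer) auto
  qed
  then show ?thesis using h by simp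
qed

lemma sep_ppt: "separable (\<rho> :: ('a::finite \<times> 'b::finite, 'a \<times> 'b) op) \<Longrightarrow> psd (partial_transpose \<rho>)"
  by (intro sep_psd sep_pt)

lemma sep_pt_iff: "separable (partial_transpose \<rho>) \<longleftrightarrow> separable \<rho>"
  using sep_pt pt_pt by metis

lemma sep_filter_inv:
  fixes \<rho> :: "('a::finite \<times> 'b::finite, 'a \<times> 'b) op"
  assumes "separable (sandwich (tensor_op M N) \<rho>)" and "mmul Mi M = id_op" and "mmul Ni N = id_op"
  shows "separable \<rho>"
proof -
  have "sandwich (tensor_op Mi Ni) (sandwich (tensor_op M N) \<rho>) = \<rho>"
    by (simp add: sandwich_sandwich mmul_tensor assms tensor_id sandwich_id)
  then show ?thesis using sep_sandwich[OF assms(1), of Mi Ni] by simp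
qed

lemma two_ne[simp]: "(0::2) \<noteq> 1" "(1::2) \<noteq> 0"
  by auto

lemma m2_eqI:
  fixes X Y :: "(2, 2) op"
  assumes "X 0 0 = Y 0 0" "X 0 1 = Y 0 1" "X 1 0 = Y 1 0" "X 1 1 = Y 1 1"
  shows "X = Y"
proof (intro ext)
  fix i j :: 2
  show "X i j = Y i j" using assms two_cases[of i] two_cases[of j] by auto
qed

lemma v2_eqI:
  fixes x y :: "2 \<Rightarrow> complex"
  assumes "x 0 = y 0" "x 1 = y 1"
  shows "x = y"
proof (intro ext)
  fix i :: 2
  show "x i = y i" using assms two_cases[of i] by auto
qed

lemma v2_neq: "(x :: 2 \<Rightarrow> complex) \<noteq> (\<lambda>_. 0) \<longleftrightarrow> x 0 \<noteq> 0 \<or> x 1 \<noteq> 0"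
  using v2_eqI[of x "\<lambda>_. 0"] by auto

lemma expval2: "expval (X :: (2,2) op) v = cnj (v 0) * X 0 0 * v 0 + cnj (v 0) * X 0 1 * v 1 + cnj (v 1) * X 1 0 * v 0 + cnj (v 1) * X 1 1 * v 1"
  by (simp add: expval_def sum2 algebra_simps)

lemma app2: "app (X :: (2,2) op) v = (\<lambda>i. X i 0 * v 0 + X i 1 * v 1)"
  by (simp add: app_def sum2)

lemma inner2: "inner_c (u :: 2 \<Rightarrow> complex) v = cnj (u 0) * v 0 + cnj (u 1) * v 1"
  by (simp add: inner_c_def sum2)

lemma mmul2: "mmul (X :: (2,2) op) Y = (\<lambda>i j. X i 0 * Y 0 j + X i 1 * Y 1 j)"
  by (simp add: mmul_def sum2)

definition det2 :: "(2,2) op \<Rightarrow> complex" where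
  "det2 X = X 0 0 * X 1 1 - X 0 1 * X 1 0"

definition inv2 :: "(2,2) op \<Rightarrow> (2,2) op" where
  "inv2 X = (\<lambda>i j. (if i = 0 then (if j = 0 then X 1 1 else - X 0 1) else (if j = 0 then - X 1 0 else X 0 0)) / det2 X)"

lemma id_op2: "(id_op :: (2,2) op) 0 0 = 1" "(id_op :: (2,2) op) 0 1 = 0" "(id_op :: (2,2) op) 1 0 = 0" "(id_op :: (2,2) op) 1 1 = 1"
  by (auto simp: id_op_def)

lemma mmul_inv2:
  assumes "det2 X \<noteq> 0" shows "mmul (inv2 X) X = id_op"
proof -
  define d where "d = det2 X"
  have dd: "X 0 0 * X 1 1 - X 0 1 * X 1 0 = d" by (simp add: det2_def d_def)
  have d0: "d \<noteq> 0" using assms d_def by simp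
  have e1: "X 1 1 / d * X 0 0 + - X 0 1 / d * X 1 0 = 1"
    using d0 dd by (simp add: field_simps mult.commute)
  have e2: "X 1 1 / d * X 0 1 + - X 0 1 / d * X 1 1 = 0"
    by (simp add: field_simps)
  have e3: "- X 1 0 / d * X 0 0 + X 0 0 / d * X 1 0 = 0"
    by (simp add: field_simps)
  have e4: "- X 1 0 / d * X 0 1 + X 0 0 / d * X 1 1 = 1"
    using d0 dd by (simp add: field_simps mult.commute)
  have f1: "X 1 1 * X 0 0 / d - X 0 1 * X 1 0 / d = 1" "X 0 0 * X 1 1 / d - X 1 0 * X 0 1 / d = 1"
    using d0 dd by (simp_all add: diff_divide_distrib[symmetric] mult.commute)
  show ?thesis
    by (rule m2_eqI) (simp_all add: mmul2 inv2_def id_op2 d_def[symmetric] e1 e2 e3 e4 f1)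
qed

lemma cmod_sq: "(cmod z)^2 = (Re z)^2 + (Im z)^2"
  by (simp add: cmod_power2)

lemma cmod_mult_self: "cmod z * cmod z = Re z * Re z + Im z * Im z"
  using cmod_sq[of z] by (simp add: power2_eq_square)

lemma cmodsq2: "complex_of_real (cmod b) * complex_of_real (cmod b) = b * cnj b"
  by (metis complex_norm_square of_real_mult power2_eq_square)

lemma psd2_iff:
  fixes X :: "(2,2) op"
  shows "psd X \<longleftrightarrow> X 0 1 = cnj (X 1 0) \<and> Im (X 0 0) = 0 \<and> Im (X 1 1) = 0 \<and>
    0 \<le> Re (X 0 0) \<and> 0 \<le> Re (X 1 1) \<and> (cmod (X 0 1))^2 \<le> Re (X 0 0) * Re (X 1 1)"
  (is "_ \<longleftrightarrow> ?R")
proof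
  assume p: "psd X"
  have h: "X 0 1 = cnj (X 1 0)" using psd_herm[OF p, of 0 1] by simp
  have d0: "Im (X 0 0) = 0" "0 \<le> Re (X 0 0)" and d1: "Im (X 1 1) = 0" "0 \<le> Re (X 1 1)"
    using psd_diag[OF p, of 0] psd_diag[OF p, of 1] by (auto simp: less_eq_complex_def)
  have "(cmod (X 0 1))^2 \<le> Re (X 0 0) * Re (X 1 1)"
  proof (cases "Re (X 0 0) = 0")
    case True
    then have "X 0 0 = 0" using d0 by (simp add: complex_eq_iff)
    then have "X 0 1 = 0" using psd_zero_diag[OF p] by simp
    then show ?thesis using True by simp
  next
    case False
    then have apos: "0 < Re (X 0 0)" using d0 by simp
    define a where "a = Re (X 0 0)"
    define b where "b = X 0 1"
    define d where "d = Re (X 1 1)"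
    have X10: "X 1 0 = cnj b" using h b_def by simp
    have X00: "X 0 0 = of_real a" using d0 a_def by (simp add: complex_eq_iff)
    have X11: "X 1 1 = of_real d" using d1 d_def by (simp add: complex_eq_iff)
    have anz: "a \<noteq> 0" using apos a_def by simp
    have "0 \<le> expval X (\<lambda>i. if i = 0 then - b / of_real a else 1)" using p psd_def by blast
    also have "expval X (\<lambda>i. if i = 0 then - b / of_real a else 1) =
       of_real (d - (cmod b)^2 / a)"
      unfolding expval2 X10 X00 X11 b_def[symmetric] using anz
      by (simp add: field_simps sum_cnj_mult_self[symmetric] power2_eq_square mult.commute cmodsq2)
    finally have "0 \<le> d - (cmod b)^2 / a" by (simp add: less_eq_complex_def)
    then have "(cmod b)^2 \<le> a * d" using apos a_def by (simp add: field_simps)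
    then show ?thesis by (simp add: a_def b_def d_def)
  qed
  then show ?R using h d0 d1 by simp
next
  assume r: ?R
  show "psd X" unfolding psd_def
  proof
    fix v :: "2 \<Rightarrow> complex"
    define a where "a = Re (X 0 0)"
    define d where "d = Re (X 1 1)"
    define b where "b = X 0 1"
    have X00: "X 0 0 = of_real a" and X11: "X 1 1 = of_real d" and X10: "X 1 0 = cnj b"
      using r by (auto simp: a_def d_def b_def complex_eq_iff)
    have ev: "expval X v = of_real (a * (cmod (v 0))^2 + 2 * Re (cnj (v 0) * b * v 1) + d * (cmod (v 1))^2)"
      unfolding expval2 X00 X11 X10 b_def[symmetric]
      by (simp add: complex_eq_iff cmod_sq power2_eq_square algebra_simps cmod_mult_self)
    have ab: "(cmod b)^2 \<le> a * d" "0 \<le> a" "0 \<le> d" using r by (auto simp: a_def b_def d_def)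
    have "0 \<le> a * (cmod (v 0))^2 + 2 * Re (cnj (v 0) * b * v 1) + d * (cmod (v 1))^2"
    proof (cases "a = 0")
      case True
      then have "b = 0" using ab by simp
      then show ?thesis using True ab by simp
    next
      case False
      then have apos: "0 < a" using ab by simp
      have key: "a * (a * (cmod (v 0))^2 + 2 * Re (cnj (v 0) * b * v 1) + d * (cmod (v 1))^2) =
         (cmod (of_real a * v 0 + b * v 1))^2 + (a * d - (cmod b)^2) * (cmod (v 1))^2"
        by (simp add: cmod_sq power2_eq_square algebra_simps cmod_mult_self)
      have "0 \<le> (cmod (of_real a * v 0 + b * v 1))^2 + (a * d - (cmod b)^2) * (cmod (v 1))^2"
        using ab by (intro add_nonneg_nonneg mult_nonneg_nonneg) auto
      then have "0 \<le> a * (a * (cmod (v 0))^2 + 2 * Re (cnj (v 0) * b * v 1) + d * (cmod (v 1))^2)"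
        using key by simp
      then show ?thesis using apos by (simp add: zero_le_mult_iff)
    qed
    then show "0 \<le> expval X v" unfolding ev by (simp add: less_eq_complex_def)
  qed
qed


lemma of_real_sqrt_sq:
  assumes "0 \<le> a" shows "complex_of_real (sqrt a) * complex_of_real (sqrt a) = complex_of_real a"
proof -
  have "sqrt a * sqrt a = a" using assms by simp
  then show ?thesis by (metis of_real_mult)
qed

lemma psd2_decomp:
  fixes X :: "(2,2) op"
  assumes "psd X"
  shows "\<exists>u1 u2. X = (\<lambda>i j. outer u1 u1 i j + outer u2 u2 i j) \<and> (det2 X = 0 \<longrightarrow> u2 = (\<lambda>_. 0))"
proof -
  have r: "X 0 1 = cnj (X 1 0)" "Im (X 0 0) = 0" "Im (X 1 1) = 0" "0 \<le> Re (X 0 0)" "0 \<le> Re (X 1 1)"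
     "(cmod (X 0 1))^2 \<le> Re (X 0 0) * Re (X 1 1)" using assms psd2_iff by auto
  define a where "a = Re (X 0 0)"
  define d where "d = Re (X 1 1)"
  define b where "b = X 1 0"
  have X00: "X 0 0 = of_real a" using r a_def by (simp add: complex_eq_iff)
  have X11: "X 1 1 = of_real d" using r d_def by (simp add: complex_eq_iff)
  have X01: "X 0 1 = cnj b" using r b_def by simp
  have cb: "cmod (X 0 1) = cmod b" using X01 by simp
  have dnn: "0 \<le> d" using r(5) d_def by simp
  have det: "det2 X = of_real (a * d - (cmod b)^2)"
    unfolding det2_def X00 X11 X01 b_def[symmetric]
    by (simp add: cmodsq2[symmetric] power2_eq_square mult.commute)
  show ?thesis
  proof (cases "a = 0")
    case True
    then have "b = 0" using r(6) cb a_def by simp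
    define u1 where "u1 = (\<lambda>i::2. if i = 0 then 0 else complex_of_real (sqrt d))"
    have "X = (\<lambda>i j. outer u1 u1 i j + outer (\<lambda>_. 0) (\<lambda>_. 0) i j)"
      using \<open>b = 0\<close> True dnn
      by (intro m2_eqI) (simp_all add: outer_def u1_def X00 X11 X01 b_def[symmetric] of_real_sqrt_sq)
    then show ?thesis by blast
  next
    case False
    then have apos: "0 < a" using r(4) a_def by simp
    define e where "e = d - (cmod b)^2 / a"
    have e0: "0 \<le> e" using r(6) cb apos by (simp add: e_def a_def d_def field_simps)
    define u1 where "u1 = (\<lambda>i::2. if i = 0 then complex_of_real (sqrt a) else b / complex_of_real (sqrt a))"
    define u2 where "u2 = (\<lambda>i::2. if i = 0 then 0 else complex_of_real (sqrt e))"
    have sa: "complex_of_real (sqrt a) \<noteq> 0" using apos by simp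
    have "X = (\<lambda>i j. outer u1 u1 i j + outer u2 u2 i j)"
    proof (rule m2_eqI)
      show "X 0 0 = outer u1 u1 0 0 + outer u2 u2 0 0"
        using apos by (simp add: outer_def u1_def u2_def X00 of_real_sqrt_sq)
      show "X 0 1 = outer u1 u1 0 1 + outer u2 u2 0 1"
        using sa by (simp add: outer_def u1_def u2_def X01)
      show "X 1 0 = outer u1 u1 1 0 + outer u2 u2 1 0"
        using sa by (simp add: outer_def u1_def u2_def b_def)
      have "b / complex_of_real (sqrt a) * cnj (b / complex_of_real (sqrt a)) = of_real ((cmod b)^2 / a)"
        using apos sa by (simp add: cmodsq2[symmetric] power2_eq_square of_real_sqrt_sq field_simps)
      then show "X 1 1 = outer u1 u1 1 1 + outer u2 u2 1 1"
        using e0 by (simp add: outer_def u1_def u2_def X11 of_real_sqrt_sq e_def)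
    qed
    moreover have "det2 X = 0 \<longrightarrow> u2 = (\<lambda>_. 0)"
    proof
      assume "det2 X = 0"
      then have "a * d - (cmod b)^2 = 0" using det by (metis of_real_eq_0_iff)
      then have "e = 0" using apos by (simp add: e_def field_simps)
      then show "u2 = (\<lambda>_. 0)" by (simp add: u2_def fun_eq_iff)
    qed
    ultimately show ?thesis by blast
  qed
qed

lemma psd2_rank1:
  fixes X :: "(2,2) op"
  assumes "psd X" "det2 X = 0"
  shows "\<exists>u. X = outer u u"
proof -
  obtain u1 u2 where h: "X = (\<lambda>i j. outer u1 u1 i j + outer u2 u2 i j)" "u2 = (\<lambda>_. 0)"
    using psd2_decomp[OF assms(1)] assms(2) by blast
  then have "X = outer u1 u1" by (simp add: outer_def)
  then show ?thesis by blast
qed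

lemma outer_kernel2:
  fixes u :: "2 \<Rightarrow> complex"
  shows "\<exists>z. z \<noteq> (\<lambda>_. 0) \<and> inner_c u z = 0"
proof (cases "u = (\<lambda>_. 0)")
  case True
  then show ?thesis by (intro exI[of _ "bvec 0"]) (auto simp: inner_c_def bvec_def fun_eq_iff)
next
  case False
  define z where "z = (\<lambda>i::2. if i = 0 then - cnj (u 1) else cnj (u 0))"
  have "z \<noteq> (\<lambda>_. 0)" using False v2_neq[of u] v2_neq[of z] by (auto simp: z_def)
  moreover have "inner_c u z = 0" by (simp add: inner2 z_def)
  ultimately show ?thesis by blast
qed

lemma psd2_sing_kernel:
  fixes X :: "(2,2) op"
  assumes "psd X" "det2 X = 0"
  shows "\<exists>z. z \<noteq> (\<lambda>_. 0) \<and> expval X z = 0"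
proof -
  obtain u where u: "X = outer u u" using psd2_rank1[OF assms] by blast
  obtain z where z: "z \<noteq> (\<lambda>_. 0)" "inner_c u z = 0" using outer_kernel2 by blast
  show ?thesis using u z by (intro exI[of _ z]) (simp add: expval_outer)
qed

lemma quad_root:
  fixes a b c :: complex
  assumes "a \<noteq> 0"
  shows "\<exists>s. a * s^2 + b * s + c = 0"
proof -
  define r where "r = csqrt (b^2 - 4 * a * c)"
  have r2: "r^2 = b^2 - 4 * a * c" by (simp add: r_def)
  define s where "s = (- b + r) / (2 * a)"
  have "a * s^2 + b * s + c = ((- b + r)^2 + 2 * b * (- b + r) + 4 * a * c) / (4 * a)"
    using assms by (simp add: s_def field_simps power2_eq_square)
  also have "(- b + r)^2 + 2 * b * (- b + r) + 4 * a * c = r^2 - b^2 + 4 * a * c"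
    by (simp add: power2_eq_square algebra_simps)
  also have "\<dots> = 0" using r2 by simp
  finally show ?thesis by auto
qed

lemma traceless_null:
  fixes H :: "(2,2) op"
  assumes "H 0 0 + H 1 1 = 0"
  shows "\<exists>y. y \<noteq> (\<lambda>_. 0) \<and> expval H y = 0"
proof (cases "H 0 0 = 0")
  case True
  have "expval H (bvec 0) = 0" by (simp add: expval_bvec True)
  moreover have "bvec (0::2) \<noteq> (\<lambda>_. 0)" by (auto simp: bvec_def fun_eq_iff)
  ultimately show ?thesis by blast
next
  case False
  define a where "a = H 0 1 / H 0 0"
  define b where "b = H 1 0 / H 0 0"
  define dd where "dd = a - cnj b"
  define \<omega> where "\<omega> = (if dd = 0 then 1 else cnj dd / of_real (cmod dd))"
  have wn: "\<omega> * cnj \<omega> = 1"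
  proof (cases "dd = 0")
    case True then show ?thesis by (simp add: \<omega>_def)
  next
    case False
    have "\<omega> * cnj \<omega> = (dd * cnj dd) / (complex_of_real (cmod dd) * complex_of_real (cmod dd))"
      using False by (simp add: \<omega>_def mult.commute)
    also have "\<dots> = 1" using False by (simp only: cmodsq2) simp
    finally show ?thesis .
  qed
  have real: "Im (a * \<omega> + b * cnj \<omega>) = 0"
  proof (cases "dd = 0")
    case True then show ?thesis by (simp add: \<omega>_def dd_def)
  next
    case False
    have "a * \<omega> + b * cnj \<omega> = (dd * cnj dd) / of_real (cmod dd) + cnj (b * cnj \<omega>) + b * cnj \<omega>"
      using False by (simp add: \<omega>_def dd_def field_simps)
    then show ?thesis by (simp add: cmodsq2[symmetric])
  qed
  define c where "c = Re (a * \<omega> + b * cnj \<omega>)"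
  have cc: "a * \<omega> + b * cnj \<omega> = of_real c" using real by (simp add: c_def complex_eq_iff)
  define r where "r = (c + sqrt (c^2 + 4)) / 2"
  have rr: "1 - r^2 + r * c = 0"
  proof -
    have s: "sqrt (c^2 + 4) * sqrt (c^2 + 4) = c^2 + 4" by (simp add: add_nonneg_nonneg)
    show ?thesis unfolding r_def by (simp add: power2_eq_square field_simps s)
  qed
  define y where "y = (\<lambda>i::2. if i = 0 then 1 else of_real r * \<omega>)"
  have H11: "H 1 1 = - H 0 0" using assms by (simp add: add_eq_0_iff)
  have "expval H y = H 0 0 * (1 - of_real r * of_real r * (\<omega> * cnj \<omega>) + of_real r * (a * \<omega> + b * cnj \<omega>))"
    using False by (simp add: expval2 y_def H11 a_def b_def field_simps)
  also have "\<dots> = H 0 0 * of_real (1 - r^2 + r * c)"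
    by (simp add: wn cc power2_eq_square)
  also have "\<dots> = 0" by (simp add: rr)
  finally show ?thesis by (intro exI[of _ y]) (auto simp: y_def fun_eq_iff)
qed

definition detv :: "(2 \<times> 2 \<Rightarrow> complex) \<Rightarrow> complex" where
  "detv k = k (0,0) * k (1,1) - k (0,1) * k (1,0)"

lemma v4_eqI:
  fixes x y :: "2 \<times> 2 \<Rightarrow> complex"
  assumes "x (0,0) = y (0,0)" "x (0,1) = y (0,1)" "x (1,0) = y (1,0)" "x (1,1) = y (1,1)"
  shows "x = y"
proof (intro ext)
  fix p :: "2 \<times> 2"
  obtain i j where "p = (i, j)" by (cases p)
  then show "x p = y p" using assms two_cases[of i] two_cases[of j] by auto
qed

lemma v4_neq: "(x :: 2 \<times> 2 \<Rightarrow> complex) \<noteq> (\<lambda>_. 0) \<longleftrightarrow> x (0,0) \<noteq> 0 \<or> x (0,1) \<noteq> 0 \<or> x (1,0) \<noteq> 0 \<or> x (1,1) \<noteq> 0"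
  using v4_eqI[of x "\<lambda>_. 0"] by auto

lemma prodvec:
  fixes k :: "2 \<times> 2 \<Rightarrow> complex"
  assumes "detv k = 0" "k \<noteq> (\<lambda>_. 0)"
  shows "\<exists>a z. a \<noteq> (\<lambda>_. 0) \<and> z \<noteq> (\<lambda>_. 0) \<and> k = tensv a z"
proof (cases "k (0,0) = 0 \<and> k (0,1) = 0")
  case True
  define z where "z = (\<lambda>j::2. k (1, j))"
  have "k = tensv (bvec 1) z" using True by (intro v4_eqI) (simp_all add: z_def bvec_def)
  moreover have "z \<noteq> (\<lambda>_. 0)" using assms(2) True v4_neq[of k] v2_neq[of z] by (auto simp: z_def)
  moreover have "bvec (1::2) \<noteq> (\<lambda>_. 0)" by (auto simp: bvec_def fun_eq_iff)
  ultimately show ?thesis by blast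
next
  case False
  define z where "z = (\<lambda>j::2. k (0, j))"
  define r where "r = (if k (0,0) \<noteq> 0 then k (1,0) / k (0,0) else k (1,1) / k (0,1))"
  define a where "a = (\<lambda>i::2. if i = 0 then 1 else r)"
  have d: "k (0,0) * k (1,1) = k (0,1) * k (1,0)" using assms(1) by (simp add: detv_def)
  have "k = tensv a z"
  proof (cases "k (0,0) = 0")
    case True
    then have "k (0,1) \<noteq> 0" using False by simp
    moreover have "k (1,0) = 0" using d True \<open>k (0,1) \<noteq> 0\<close> by simp
    ultimately show ?thesis using True by (intro v4_eqI) (simp_all add: a_def z_def r_def)
  next
    case f2: False
    have "k (1,1) = k (1,0) / k (0,0) * k (0,1)" using d f2 by (simp add: field_simps)
    then show ?thesis using f2 by (intro v4_eqI) (simp_all add: a_def z_def r_def)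
  qed
  moreover have "z \<noteq> (\<lambda>_. 0)" using False v2_neq[of z] by (auto simp: z_def)
  moreover have "a \<noteq> (\<lambda>_. 0)" by (auto simp: a_def fun_eq_iff)
  ultimately show ?thesis by blast
qed

lemma all2: "(\<forall>x::2. P x) \<longleftrightarrow> P 0 \<and> P 1"
  using two_cases by metis

lemma op4_eqI:
  fixes f g :: "(2 \<times> 2, 2 \<times> 2) op"
  assumes "\<forall>i j k l. f (i, j) (k, l) = g (i, j) (k, l)"
  shows "f = g"
  using assms by (intro op_eqI) auto

definition blk :: "('a \<times> 'b, 'a \<times> 'b) op \<Rightarrow> 'a \<Rightarrow> 'a \<Rightarrow> ('b, 'b) op" where
  "blk \<tau> i k = (\<lambda>j l. \<tau> (i, j) (k, l))"

definition emb :: "'a \<Rightarrow> ('b, 'a \<times> 'b) op" where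
  "emb i = (\<lambda>j p. bvec (i, j) p)"

lemma bvec_pair_apply: "bvec (i, j) (a, l) = bvec i a * bvec l j"
  by (auto simp: bvec_def)

lemma sandwich_emb: "sandwich (emb i) (\<tau> :: ('a::finite \<times> 'b::finite, 'a \<times> 'b) op) = blk \<tau> i i"
  by (intro ext) (simp add: sandwich_def emb_def blk_def)

lemma app_dag_emb: "app (dag (emb i)) (w :: 'b::finite \<Rightarrow> complex) = tensv (bvec i) w"
proof (intro ext)
  fix p :: "'a \<times> 'b"
  obtain a l where p: "p = (a, l)" by (cases p)
  have "app (dag (emb i)) w p = (\<Sum>j\<in>UNIV. (bvec i a * w j) * bvec l j)"
    unfolding p by (simp add: app_def dag_def emb_def bvec_pair_apply mult_ac)
  also have "\<dots> = bvec i a * w l" by (simp only: sum_bvec_r)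
  finally show "app (dag (emb i)) w p = tensv (bvec i) w p" by (simp add: p)
qed

lemma expval_tensv_bvec: "expval \<tau> (tensv (bvec i) w) = expval (blk \<tau> i i) (w :: 'b::finite \<Rightarrow> complex)"
  for \<tau> :: "('a::finite \<times> 'b::finite, 'a \<times> 'b) op"
  by (simp add: sandwich_emb[symmetric] expval_sandwich app_dag_emb)

lemma psd_blk: "psd \<tau> \<Longrightarrow> psd (blk \<tau> i i)"
  for \<tau> :: "('a::finite \<times> 'b::finite, 'a \<times> 'b) op"
  by (simp add: sandwich_emb[symmetric] psd_sandwich)

lemma dag_tensor: "dag (tensor_op M N) = tensor_op (dag M) (dag N)"
  by (rule op_eqI) (simp add: dag_def)

lemma dag_dag[simp]: "dag (dag M) = M"
  by (simp add: dag_def)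

lemma bvec_pair: "bvec (i, j) = tensv (bvec i) (bvec j)"
  by (auto simp: bvec_def fun_eq_iff)

lemma app_lin: "app A (\<lambda>x. s * k0 x + k1 x) = (\<lambda>x. s * app A k0 x + app A k1 x)"
  by (simp add: app_def distrib_left sum.distrib sum_distrib_left mult_ac)

lemma expval_kernel: "app A k = (\<lambda>_. 0) \<Longrightarrow> expval A k = 0"
  by (simp add: expval_inner inner_c_def)

lemma expval4: "expval (\<tau> :: (2 \<times> 2, 2 \<times> 2) op) v =
  (\<Sum>p\<in>{(0,0),(0,1),(1,0),(1,1)}. \<Sum>q\<in>{(0,0),(0,1),(1,0),(1,1)}. cnj (v p) * \<tau> p q * v q)"
proof -
  have "(UNIV :: (2 \<times> 2) set) = {(0,0),(0,1),(1,0),(1,1)}"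
    using two_cases by auto
  then show ?thesis by (simp add: expval_def)
qed


lemma singA0:
  fixes \<tau> :: "(2 \<times> 2, 2 \<times> 2) op"
  assumes p: "psd \<tau>" and pt: "psd (partial_transpose \<tau>)" and z: "\<tau> (0,1) (0,1) = 0"
  shows "separable \<tau>"
proof -
  have z1: "\<And>y. \<tau> (0,1) y = 0" using psd_zero_diag[OF p z] by blast
  have z2: "\<And>y. \<tau> y (0,1) = 0" using psd_herm[OF p] z1 by (metis complex_cnj_zero)
  have zp: "(partial_transpose \<tau>) (0,1) (0,1) = 0" using z by simp
  have z3: "\<And>k l. \<tau> (0,l) (k,1) = 0" using psd_zero_diag[OF pt zp] by (metis pt_apply)
  have z4: "\<And>k l. \<tau> (k,1) (0,l) = 0" using psd_herm[OF p] z3 by (metis complex_cnj_zero)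
  define a where "a = Re (\<tau> (0,0) (0,0))"
  define b where "b = \<tau> (0,0) (1,0)"
  have hb: "\<tau> (1,0) (0,0) = cnj b" using psd_herm[OF p, of "(1,0)" "(0,0)"] b_def by simp
  have ha: "\<tau> (0,0) (0,0) = of_real a" "0 \<le> a" using psd_diag[OF p, of "(0,0)"] a_def
    by (auto simp: less_eq_complex_def complex_eq_iff)
  define C where "C = blk \<tau> 1 1"
  have Cpsd: "psd C" using psd_blk[OF p] C_def by simp
  have Cjl: "\<And>j l. \<tau> (1,j) (1,l) = C j l" by (simp add: C_def blk_def)
  show ?thesis
  proof (cases "a = 0")
    case True
    then have a0: "\<tau> (0,0) (0,0) = 0" using ha by simp
    have z5: "\<And>y. \<tau> (0,0) y = 0" using psd_zero_diag[OF p a0] by blast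
    have z6: "\<And>y. \<tau> y (0,0) = 0" using psd_herm[OF p] z5 by (metis complex_cnj_zero)
    obtain u1 u2 where u: "C = (\<lambda>i j. outer u1 u1 i j + outer u2 u2 i j)"
      using psd2_decomp[OF Cpsd] by blast
    have "\<tau> = (\<lambda>x y. outer (tensv (bvec 1) u1) (tensv (bvec 1) u1) x y + outer (tensv (bvec 1) u2) (tensv (bvec 1) u2) x y)"
      apply (rule op4_eqI)
      apply (simp only: all2)
      by (simp add: outer_def bvec_def z1 z2 z5 z6 Cjl u)
    then show ?thesis using sep_add[OF sep_prod1 sep_prod1] by simp
  next
    case False
    then have apos: "0 < a" using ha by simp
    define ra where "ra = sqrt a"
    have ra: "complex_of_real ra * complex_of_real ra = of_real a" "complex_of_real ra \<noteq> 0"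
      using apos of_real_sqrt_sq[of a] by (auto simp: ra_def)
    define x where "x = (\<lambda>i::2. if i = 0 then complex_of_real ra else cnj b / complex_of_real ra)"
    define C' where "C' = (\<lambda>j l. C j l - (if j = 0 \<and> l = 0 then b * cnj b / of_real a else 0))"
    have C'psd: "psd C'"
      unfolding psd_def
    proof
      fix w :: "2 \<Rightarrow> complex"
      define v where "v = (\<lambda>(i::2, j::2). if i = 0 then (if j = 0 then - b * w 0 / of_real a else 0) else w j)"
      have "expval \<tau> v = expval C' w"
        using apos
        apply (simp add: expval4 v_def z1 z2 z3 z4 hb ha Cjl expval2 C'_def b_def[symmetric])
        by (simp add: field_simps)
      then show "0 \<le> expval C' w" using p psd_def by metis
    qed
    obtain u1 u2 where u: "C' = (\<lambda>i j. outer u1 u1 i j + outer u2 u2 i j)"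
      using psd2_decomp[OF C'psd] by blast
    have Cjl': "\<And>j l. C j l = C' j l + (if j = 0 \<and> l = 0 then b * cnj b / of_real a else 0)"
      by (simp add: C'_def)
    have "\<tau> = (\<lambda>p q. (outer (tensv x (bvec 0)) (tensv x (bvec 0)) p q + outer (tensv (bvec 1) u1) (tensv (bvec 1) u1) p q) + outer (tensv (bvec 1) u2) (tensv (bvec 1) u2) p q)"
      apply (rule op4_eqI)
      apply (simp only: all2)
      using ra apos
      by (simp add: outer_def bvec_def z1 z2 z3 z4 hb ha Cjl Cjl' u x_def field_simps b_def[symmetric])
    then show ?thesis using sep_add[OF sep_add[OF sep_prod1 sep_prod1] sep_prod1] by simp
  qed
qed


lemma det2_dag_pos:
  fixes a :: "2 \<Rightarrow> complex"
  assumes "a \<noteq> (\<lambda>_. 0)"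
  shows "cnj (a 0) * a 0 + cnj (a 1) * a 1 \<noteq> 0"
proof -
  have "cnj (a 0) * a 0 + cnj (a 1) * a 1 = of_real ((cmod (a 0))^2 + (cmod (a 1))^2)"
    by (simp add: sum_cnj_mult_self)
  moreover have "(cmod (a 0))^2 + (cmod (a 1))^2 \<noteq> 0"
    using assms v2_neq[of a] by (auto simp: add_nonneg_eq_0_iff)
  ultimately show ?thesis by (metis of_real_eq_0_iff)
qed

lemma singA:
  fixes \<tau> :: "(2 \<times> 2, 2 \<times> 2) op"
  assumes p: "psd \<tau>" and pt: "psd (partial_transpose \<tau>)"
    and a: "a \<noteq> (\<lambda>_. 0)" and z: "z \<noteq> (\<lambda>_. 0)" and e: "expval \<tau> (tensv a z) = 0"
  shows "separable \<tau>"
proof -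
  define Ma :: "(2,2) op" where "Ma = (\<lambda>i j. if i = 0 then (if j = 0 then a 0 else - cnj (a 1)) else (if j = 0 then a 1 else cnj (a 0)))"
  define Nz :: "(2,2) op" where "Nz = (\<lambda>i j. if i = 0 then (if j = 0 then - cnj (z 1) else z 0) else (if j = 0 then cnj (z 0) else z 1))"
  define M where "M = dag Ma"
  define N where "N = dag Nz"
  have aM: "app Ma (bvec 0) = a" by (rule v2_eqI) (simp_all add: app2 Ma_def bvec_def)
  have zN: "app Nz (bvec 1) = z" by (rule v2_eqI) (simp_all add: app2 Nz_def bvec_def)
  define \<tau>' where "\<tau>' = sandwich (tensor_op M N) \<tau>"
  have "\<tau>' (0,1) (0,1) = expval \<tau>' (bvec (0,1))" by (simp add: expval_bvec)
  also have "\<dots> = expval \<tau> (tensv a z)"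
    by (simp add: \<tau>'_def expval_sandwich dag_tensor M_def N_def bvec_pair app_tensor aM zN)
  finally have z': "\<tau>' (0,1) (0,1) = 0" using e by simp
  have p': "psd \<tau>'" using psd_sandwich[OF p] \<tau>'_def by simp
  have pt': "psd (partial_transpose \<tau>')" using psd_sandwich[OF pt] by (simp add: \<tau>'_def pt_sandwich)
  have s': "separable \<tau>'" using singA0[OF p' pt' z'] .
  have dM: "det2 M \<noteq> 0"
    using det2_dag_pos[OF a] by (simp add: det2_def M_def dag_def Ma_def algebra_simps)
  have "det2 N = - (cnj (z 0) * z 0 + cnj (z 1) * z 1)"
    by (simp add: det2_def N_def dag_def Nz_def algebra_simps)
  then have dN: "det2 N \<noteq> 0" using det2_dag_pos[OF z] by (metis neg_equal_0_iff_equal)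
  show ?thesis using sep_filter_inv[OF s'[unfolded \<tau>'_def] mmul_inv2[OF dM] mmul_inv2[OF dN]] .
qed

lemma kern2:
  fixes \<tau> :: "(2 \<times> 2, 2 \<times> 2) op"
  assumes p: "psd \<tau>" and pt: "psd (partial_transpose \<tau>)"
    and k0: "app \<tau> k0 = (\<lambda>_. 0)" and k1: "app \<tau> k1 = (\<lambda>_. 0)"
    and nz0: "k0 \<noteq> (\<lambda>_. 0)" and nz: "\<forall>s. (\<lambda>x. s * k0 x + k1 x) \<noteq> (\<lambda>_. 0)"
  shows "separable \<tau>"
proof -
  have "\<exists>k. k \<noteq> (\<lambda>_. 0) \<and> app \<tau> k = (\<lambda>_. 0) \<and> detv k = 0"
  proof (cases "detv k0 = 0")
    case True then show ?thesis using nz0 k0 by blast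
  next
    case False
    define m where "m = k0 (0,0) * k1 (1,1) + k1 (0,0) * k0 (1,1) - k0 (0,1) * k1 (1,0) - k1 (0,1) * k0 (1,0)"
    obtain s where s: "detv k0 * s^2 + m * s + detv k1 = 0" using quad_root[OF False] by blast
    define k where "k = (\<lambda>x. s * k0 x + k1 x)"
    have "detv k = detv k0 * s^2 + m * s + detv k1"
      by (simp add: detv_def k_def m_def power2_eq_square algebra_simps)
    then have "detv k = 0" using s by simp
    moreover have "app \<tau> k = (\<lambda>_. 0)" by (simp add: k_def app_lin k0 k1)
    moreover have "k \<noteq> (\<lambda>_. 0)" using nz[rule_format, of s] k_def by simp
    ultimately show ?thesis by blast
  qed
  then obtain k where k: "k \<noteq> (\<lambda>_. 0)" "app \<tau> k = (\<lambda>_. 0)" "detv k = 0" by blast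
  obtain a z where az: "a \<noteq> (\<lambda>_. 0)" "z \<noteq> (\<lambda>_. 0)" "k = tensv a z" using prodvec[OF k(3) k(1)] by blast
  show ?thesis using singA[OF p pt az(1) az(2)] expval_kernel[OF k(2)] az(3) by simp
qed

definition nb :: "(2,2) op \<Rightarrow> (2,2) op \<Rightarrow> (2 \<times> 2, 2 \<times> 2) op" where
  "nb B C = (\<lambda>(i,j) (k,l). if i = 0 then (if k = 0 then id_op j l else B j l) else (if k = 0 then cnj (B l j) else C j l))"

lemma nb_apply[simp]:
  "nb B C (0,j) (0,l) = id_op j l" "nb B C (0,j) (1,l) = B j l"
  "nb B C (1,j) (0,l) = cnj (B l j)" "nb B C (1,j) (1,l) = C j l"
  by (simp_all add: nb_def)

definition transp :: "('x, 'y) op \<Rightarrow> ('y, 'x) op" where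
  "transp X = (\<lambda>j l. X l j)"

definition Cs :: "(2,2) op \<Rightarrow> (2,2) op \<Rightarrow> (2,2) op" where
  "Cs B C = (\<lambda>j l. C j l - mmul (dag B) B j l)"

definition Fs :: "(2,2) op \<Rightarrow> (2,2) op \<Rightarrow> (2,2) op" where
  "Fs B C = (\<lambda>j l. C j l - mmul B (dag B) j l)"

lemma nb_of:
  fixes \<tau> :: "(2 \<times> 2, 2 \<times> 2) op"
  assumes "psd \<tau>" "blk \<tau> 0 0 = id_op"
  shows "\<tau> = nb (blk \<tau> 0 1) (blk \<tau> 1 1)"
proof (rule op4_eqI, intro allI)
  fix i j k l :: 2
  have h0: "\<tau> (0,j) (0,l) = id_op j l" for j l using assms(2) by (metis blk_def)
  have h1: "\<tau> (1,j) (0,l) = cnj (\<tau> (0,l) (1,j))" for j l using psd_herm[OF assms(1)] by blast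
  show "\<tau> (i, j) (k, l) = nb (blk \<tau> 0 1) (blk \<tau> 1 1) (i, j) (k, l)"
    using two_cases[of i] two_cases[of k] by (auto simp: h0 h1 blk_def)
qed

lemma expval_nb:
  "expval (nb B C) v =
    cnj (v (0,0) + app B (\<lambda>j. v (1,j)) 0) * (v (0,0) + app B (\<lambda>j. v (1,j)) 0) +
    cnj (v (0,1) + app B (\<lambda>j. v (1,j)) 1) * (v (0,1) + app B (\<lambda>j. v (1,j)) 1) +
    expval (Cs B C) (\<lambda>j. v (1,j))"
  by (simp add: expval4 expval2 app2 Cs_def mmul2 dag_def id_op2 algebra_simps)

lemma psd_nb_iff: "psd (nb B C) \<longleftrightarrow> psd (Cs B C)"
proof
  assume p: "psd (nb B C)"
  show "psd (Cs B C)" unfolding psd_def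
  proof
    fix w :: "2 \<Rightarrow> complex"
    define v where "v = (\<lambda>(i::2, j::2). if i = 0 then - app B w j else w j)"
    have "expval (nb B C) v = expval (Cs B C) w"
      unfolding expval_nb by (simp add: v_def)
    then show "0 \<le> expval (Cs B C) w" using p psd_def by metis
  qed
next
  assume p: "psd (Cs B C)"
  show "psd (nb B C)" unfolding psd_def expval_nb
    using p psd_def cmod_sq_nonneg by (metis add_nonneg_nonneg)
qed

lemma pt_nb: "partial_transpose (nb B C) = nb (transp B) (transp C)"
  by (rule op4_eqI) (simp add: all2 transp_def id_op2)

lemma expval_transp: "expval (transp X) v = expval X (conjv v)"
  unfolding expval_def transp_def conjv_def
  by (subst sum.swap) (simp add: mult_ac)

lemma psd_transp: "psd (transp X) \<longleftrightarrow> psd X"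
proof
  assume "psd (transp X)"
  then show "psd X" unfolding psd_def
    by (metis expval_transp conjv_def complex_cnj_cnj ext)
next
  assume "psd X"
  then show "psd (transp X)" unfolding psd_def by (simp add: expval_transp)
qed

lemma Cs_transp: "Cs (transp B) (transp C) = transp (Fs B C)"
  by (rule m2_eqI) (simp_all add: Cs_def Fs_def transp_def mmul2 dag_def mult.commute)

lemma Fs_transp: "Fs (transp B) (transp C) = transp (Cs B C)"
  by (rule m2_eqI) (simp_all add: Cs_def Fs_def transp_def mmul2 dag_def mult.commute)

lemma transp_transp[simp]: "transp (transp X) = X"
  by (simp add: transp_def)

lemma ppt_nb_iff: "psd (nb B C) \<and> psd (partial_transpose (nb B C)) \<longleftrightarrow> psd (Cs B C) \<and> psd (Fs B C)"
  by (simp add: psd_nb_iff pt_nb Cs_transp psd_transp)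

definition low :: "(2,2) op \<Rightarrow> (2 \<times> 2, 2 \<times> 2) op" where
  "low G = (\<lambda>(i,j) (k,l). if i = 1 \<and> k = 1 then G j l else 0)"

lemma sep_low:
  assumes "psd G" shows "separable (low G)"
proof -
  obtain u1 u2 where u: "G = (\<lambda>i j. outer u1 u1 i j + outer u2 u2 i j)"
    using psd2_decomp[OF assms] by blast
  have "low G = (\<lambda>x y. outer (tensv (bvec 1) u1) (tensv (bvec 1) u1) x y + outer (tensv (bvec 1) u2) (tensv (bvec 1) u2) x y)"
    by (rule op4_eqI) (simp add: all2 low_def outer_def bvec_def u)
  then show ?thesis using sep_add[OF sep_prod1 sep_prod1] by simp
qed

lemma nb_split: "nb B C = (\<lambda>x y. nb B (\<lambda>j l. C j l - G j l) x y + low G x y)"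
  by (rule op4_eqI) (simp add: all2 low_def id_op2)

lemma app4: "app (\<tau> :: (2 \<times> 2, 2 \<times> 2) op) k = (\<lambda>p. \<tau> p (0,0) * k (0,0) + \<tau> p (0,1) * k (0,1) + \<tau> p (1,0) * k (1,0) + \<tau> p (1,1) * k (1,1))"
  by (simp add: app_def sum_prod_UNIV sum2 add.assoc)

lemma nbE0:
  assumes F: "psd (Fs B C)" and E: "Cs B C = (\<lambda>_ _. 0)"
  shows "separable (nb B C)"
proof -
  have C: "C = mmul (dag B) B" using E by (intro ext) (simp add: Cs_def fun_eq_iff)
  have ppt: "psd (nb B C) \<and> psd (partial_transpose (nb B C))"
    using ppt_nb_iff F E psd_zero by simp
  define k0 where "k0 = (\<lambda>(i::2, l::2). if i = 0 then - B l 0 else bvec 0 l)"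
  define k1 where "k1 = (\<lambda>(i::2, l::2). if i = 0 then - B l 1 else bvec 1 l)"
  have a0: "app (nb B C) k0 = (\<lambda>_. 0)"
    by (rule v4_eqI) (simp_all add: app4 k0_def bvec_def id_op2 C mmul2 dag_def)
  have a1: "app (nb B C) k1 = (\<lambda>_. 0)"
    by (rule v4_eqI) (simp_all add: app4 k1_def bvec_def id_op2 C mmul2 dag_def)
  have "k0 (1,0) = 1" by (simp add: k0_def bvec_def)
  then have n0: "k0 \<noteq> (\<lambda>_. 0)" by (metis one_neq_zero)
  have n1: "\<forall>s. (\<lambda>x. s * k0 x + k1 x) \<noteq> (\<lambda>_. 0)"
  proof
    fix s
    have "(\<lambda>x. s * k0 x + k1 x) (1,1) = 1" by (simp add: k0_def k1_def bvec_def)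
    then show "(\<lambda>x. s * k0 x + k1 x) \<noteq> (\<lambda>_. 0)" by (metis one_neq_zero)
  qed
  show ?thesis using kern2[OF ppt[THEN conjunct1] ppt[THEN conjunct2] a0 a1 n0 n1] .
qed

lemma nbF0:
  assumes E: "psd (Cs B C)" and F: "Fs B C = (\<lambda>_ _. 0)"
  shows "separable (nb B C)"
proof -
  have "separable (nb (transp B) (transp C))"
  proof (rule nbE0)
    show "psd (Fs (transp B) (transp C))" using E by (simp add: Fs_transp psd_transp)
    show "Cs (transp B) (transp C) = (\<lambda>_ _. 0)" by (simp only: Cs_transp F) (simp add: transp_def)
  qed
  then show ?thesis using sep_pt_iff[of "nb B C"] by (simp add: pt_nb)
qed


lemma expval_add: "expval (\<lambda>x y. A x y + B x y) v = expval A v + expval B v"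
  by (simp add: expval_def distrib_left distrib_right sum.distrib)

lemma expval_diff: "expval (\<lambda>x y. A x y - B x y) v = expval A v - expval B v"
  by (simp add: expval_def right_diff_distrib left_diff_distrib sum_subtractf)

lemma app_outer: "app (outer c c) k = (\<lambda>p. c p * inner_c c k)"
  by (simp add: app_def outer_def inner_c_def sum_distrib_left mult_ac)

lemma app_add: "app (\<lambda>x y. A x y + B x y) k = (\<lambda>p. app A k p + app B k p)"
  by (simp add: app_def distrib_right sum.distrib)

lemma app_diff_scale: "app (\<lambda>x y. A x y - c * B x y) k = (\<lambda>p. app A k p - c * app B k p)"
  unfolding app_def by (simp add: right_diff_distrib left_diff_distrib sum_subtractf sum_distrib_left mult_ac)

lemma cs3_real:
  fixes x0 x1 x2 y0 y1 y2 :: real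
  shows "(x0 * y0 + x1 * y1 + x2 * y2)^2 \<le> (x0^2 + x1^2 + x2^2) * (y0^2 + y1^2 + y2^2)"
proof -
  have "(x0^2 + x1^2 + x2^2) * (y0^2 + y1^2 + y2^2) - (x0 * y0 + x1 * y1 + x2 * y2)^2 =
     (x0 * y1 - x1 * y0)^2 + (x0 * y2 - x2 * y0)^2 + (x1 * y2 - x2 * y1)^2"
    by (simp add: power2_eq_square algebra_simps)
  moreover have "0 \<le> (x0 * y1 - x1 * y0)^2 + (x0 * y2 - x2 * y0)^2 + (x1 * y2 - x2 * y1)^2" by simp
  ultimately show ?thesis by linarith
qed

lemma cs3:
  fixes w0 w1 w2 a0 a1 a2 :: complex
  shows "(cmod (cnj w0 * a0 + cnj w1 * a1 + cnj w2 * a2))^2 \<le>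
    ((cmod w0)^2 + (cmod w1)^2 + (cmod w2)^2) * ((cmod a0)^2 + (cmod a1)^2 + (cmod a2)^2)"
proof -
  have t: "cmod (x + y + z) \<le> cmod x + cmod y + cmod z" for x y z :: complex
    using norm_triangle_ineq[of "x + y" z] norm_triangle_ineq[of x y] by linarith
  have "cmod (cnj w0 * a0 + cnj w1 * a1 + cnj w2 * a2) \<le> cmod w0 * cmod a0 + cmod w1 * cmod a1 + cmod w2 * cmod a2"
    using t[of "cnj w0 * a0" "cnj w1 * a1" "cnj w2 * a2"] by (simp add: norm_mult)
  then have "(cmod (cnj w0 * a0 + cnj w1 * a1 + cnj w2 * a2))^2 \<le> (cmod w0 * cmod a0 + cmod w1 * cmod a1 + cmod w2 * cmod a2)^2"
    by (simp add: power_mono)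
  also have "\<dots> \<le> ((cmod w0)^2 + (cmod w1)^2 + (cmod w2)^2) * ((cmod a0)^2 + (cmod a1)^2 + (cmod a2)^2)"
    by (rule cs3_real)
  finally show ?thesis .
qed

definition cB :: "(2,2) op \<Rightarrow> 2 \<Rightarrow> (2 \<times> 2 \<Rightarrow> complex)" where
  "cB B j = (\<lambda>(i, l). if i = 0 then bvec j l else cnj (B j l))"

definition cg :: "(2 \<Rightarrow> complex) \<Rightarrow> (2 \<times> 2 \<Rightarrow> complex)" where
  "cg g = (\<lambda>(i, l). if i = 0 then 0 else g l)"

definition rho3 :: "(2,2) op \<Rightarrow> (2 \<Rightarrow> complex) \<Rightarrow> (2 \<times> 2, 2 \<times> 2) op" where
  "rho3 B g = (\<lambda>p q. outer (cB B 0) (cB B 0) p q + outer (cB B 1) (cB B 1) p q + outer (cg g) (cg g) p q)"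

definition Lw :: "(2,2) op \<Rightarrow> (2 \<Rightarrow> complex) \<Rightarrow> complex \<Rightarrow> complex \<Rightarrow> complex \<Rightarrow> (2 \<times> 2 \<Rightarrow> complex)" where
  "Lw B g w0 w1 w2 = (\<lambda>p. w0 * cB B 0 p + w1 * cB B 1 p + w2 * cg g p)"

lemma cB_apply[simp]: "cB B j (0,l) = bvec j l" "cB B j (1,l) = cnj (B j l)"
  by (simp_all add: cB_def)

lemma cg_apply[simp]: "cg g (0,l) = 0" "cg g (1,l) = g l"
  by (simp_all add: cg_def)

lemma rho3_nb: "rho3 B g = nb B (\<lambda>j l. mmul (dag B) B j l + outer g g j l)"
  by (rule op4_eqI) (simp add: all2 rho3_def outer_def bvec_def mmul2 dag_def id_op2)

lemma inner_Lw: "inner_c (Lw B g w0 w1 w2) u = cnj w0 * inner_c (cB B 0) u + cnj w1 * inner_c (cB B 1) u + cnj w2 * inner_c (cg g) u"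
  by (simp add: Lw_def inner_c_def distrib_left distrib_right sum.distrib sum_distrib_left mult_ac)

lemma psd_minus:
  assumes t0: "0 \<le> t" and tw: "t * ((cmod w0)^2 + (cmod w1)^2 + (cmod w2)^2) \<le> 1"
  shows "psd (\<lambda>p q. rho3 B g p q - of_real t * outer (Lw B g w0 w1 w2) (Lw B g w0 w1 w2) p q)"
  unfolding psd_def
proof
  fix u :: "2 \<times> 2 \<Rightarrow> complex"
  define a0 where "a0 = inner_c (cB B 0) u"
  define a1 where "a1 = inner_c (cB B 1) u"
  define a2 where "a2 = inner_c (cg g) u"
  define S where "S = (cmod a0)^2 + (cmod a1)^2 + (cmod a2)^2"
  define W where "W = (cmod w0)^2 + (cmod w1)^2 + (cmod w2)^2"
  define I where "I = cnj w0 * a0 + cnj w1 * a1 + cnj w2 * a2"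
  have e1: "expval (rho3 B g) u = of_real S"
    unfolding rho3_def expval_add expval_outer S_def a0_def a1_def a2_def
    by (simp add: sum_cnj_mult_self)
  have iI: "inner_c (Lw B g w0 w1 w2) u = I" unfolding inner_Lw I_def a0_def a1_def a2_def ..
  have e2: "expval (outer (Lw B g w0 w1 w2) (Lw B g w0 w1 w2)) u = of_real ((cmod I)^2)"
    by (simp only: expval_outer iI sum_cnj_mult_self)
  have "(cmod I)^2 \<le> W * S" unfolding I_def W_def S_def by (rule cs3)
  then have "t * (cmod I)^2 \<le> t * W * S" using t0 by (simp add: mult_left_mono mult.assoc)
  also have "\<dots> \<le> S" using tw t0 S_def W_def
    by (metis mult_left_le_one_le mult_nonneg_nonneg zero_le_power2 add_nonneg_nonneg mult.commute)
  finally have "0 \<le> S - t * (cmod I)^2" by simp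
  moreover have "expval (\<lambda>p q. rho3 B g p q - of_real t * outer (Lw B g w0 w1 w2) (Lw B g w0 w1 w2) p q) u =
      of_real (S - t * (cmod I)^2)"
    unfolding expval_diff expval_scale e1 e2 by simp
  ultimately show "0 \<le> expval (\<lambda>p q. rho3 B g p q - of_real t * outer (Lw B g w0 w1 w2) (Lw B g w0 w1 w2) p q) u"
    by (simp add: less_eq_complex_def)
qed


lemma inner4: "inner_c (x :: 2 \<times> 2 \<Rightarrow> complex) y = cnj (x (0,0)) * y (0,0) + cnj (x (0,1)) * y (0,1) + cnj (x (1,0)) * y (1,0) + cnj (x (1,1)) * y (1,1)"
  by (simp add: inner_c_def sum_prod_UNIV sum2 add.assoc)

lemma inner_lin2: "inner_c c (\<lambda>x. s * a x + b x) = s * inner_c c a + inner_c c b"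
  by (simp add: inner_c_def distrib_left sum.distrib sum_distrib_left mult_ac)

lemma app_rho3: "app (rho3 B g) k = (\<lambda>p. cB B 0 p * inner_c (cB B 0) k + cB B 1 p * inner_c (cB B 1) k + cg g p * inner_c (cg g) k)"
  unfolding rho3_def app_add app_outer ..

definition perpv :: "(2 \<Rightarrow> complex) \<Rightarrow> (2 \<Rightarrow> complex)" where
  "perpv g = (\<lambda>i. if i = 0 then cnj (g 1) else - cnj (g 0))"

lemma perpv_nz: "g \<noteq> (\<lambda>_. 0) \<Longrightarrow> perpv g \<noteq> (\<lambda>_. 0)"
  using v2_neq[of g] v2_neq[of "perpv g"] by (auto simp: perpv_def)

lemma G3:
  fixes B :: "(2,2) op" and g :: "2 \<Rightarrow> complex"
  assumes g: "g \<noteq> (\<lambda>_. 0)" and w: "w0 \<noteq> 0 \<or> w1 \<noteq> 0"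
    and nw: "nw = (cmod w0)^2 + (cmod w1)^2 + (cmod w2)^2"
    and pt: "psd (partial_transpose (\<lambda>p q. rho3 B g p q - of_real (1/nw) * outer (Lw B g w0 w1 w2) (Lw B g w0 w1 w2) p q))"
  shows "separable (\<lambda>p q. rho3 B g p q - of_real (1/nw) * outer (Lw B g w0 w1 w2) (Lw B g w0 w1 w2) p q)"
proof -
  define v where "v = Lw B g w0 w1 w2"
  define \<tau> where "\<tau> = (\<lambda>p q. rho3 B g p q - of_real (1/nw) * outer v v p q)"
  have nwpos: "0 < nw" using w nw by (auto simp: add_pos_nonneg add_nonneg_pos)
  have p\<tau>: "psd \<tau>" unfolding \<tau>_def v_def
    using nwpos by (intro psd_minus) (auto simp: nw)
  have pt\<tau>: "psd (partial_transpose \<tau>)" using pt by (simp add: \<tau>_def v_def)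
  define p where "p = perpv g"
  define ng where "ng = cnj (g 0) * g 0 + cnj (g 1) * g 1"
  have ng: "ng \<noteq> 0" using det2_dag_pos[OF g] ng_def by simp
  define m where "m = (\<lambda>l. (w2 / ng) * g l)"
  define k0 where "k0 = (\<lambda>(i::2, l::2). if i = 0 then - app B p l else p l)"
  define k1 where "k1 = (\<lambda>(i::2, l::2). if i = 0 then (if l = 0 then w0 else w1) - app B m l else m l)"
  have i00: "inner_c (cB B 0) k0 = 0" "inner_c (cB B 1) k0 = 0" "inner_c (cg g) k0 = 0"
    by (simp_all add: inner4 k0_def bvec_def app2 p_def perpv_def algebra_simps)
  have i1: "inner_c (cB B 0) k1 = w0" "inner_c (cB B 1) k1 = w1"
    by (simp_all add: inner4 k1_def bvec_def app2)
  have "inner_c (cg g) k1 = w2 / ng * ng"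
    by (simp add: inner4 k1_def m_def ng_def algebra_simps add_divide_distrib)
  then have i12: "inner_c (cg g) k1 = w2" using ng by simp
  have a0: "app \<tau> k0 = (\<lambda>_. 0)"
    unfolding \<tau>_def v_def app_diff_scale app_rho3 app_outer inner_Lw i00 by simp
  have nwc: "cnj w0 * w0 + cnj w1 * w1 + cnj w2 * w2 = of_real nw"
    by (simp add: nw sum_cnj_mult_self)
  have a1: "app \<tau> k1 = (\<lambda>_. 0)"
  proof -
    have "app \<tau> k1 = (\<lambda>pp. v pp - of_real (1/nw) * (v pp * of_real nw))"
      unfolding \<tau>_def v_def app_diff_scale app_rho3 app_outer inner_Lw i1 i12 nwc
      by (simp add: Lw_def mult_ac)
    then show ?thesis using nwpos by simp
  qed
  have n0: "k0 \<noteq> (\<lambda>_. 0)"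
  proof
    assume "k0 = (\<lambda>_. 0)"
    then have "p = (\<lambda>_. 0)" by (intro ext) (metis (mono_tags, lifting) case_prod_conv k0_def one_neq_zero two_ne(2))
    then show False using perpv_nz[OF g] p_def by simp
  qed
  have n1: "\<forall>s. (\<lambda>x. s * k0 x + k1 x) \<noteq> (\<lambda>_. 0)"
  proof (intro allI notI)
    fix s assume h: "(\<lambda>x. s * k0 x + k1 x) = (\<lambda>_. 0)"
    have "inner_c (cB B 0) (\<lambda>x. s * k0 x + k1 x) = w0" "inner_c (cB B 1) (\<lambda>x. s * k0 x + k1 x) = w1"
      by (simp_all add: inner_lin2 i00 i1)
    then have "w0 = 0" "w1 = 0" using h by (simp_all add: inner_c_def)
    then show False using w by simp
  qed
  have "separable \<tau>" using kern2[OF p\<tau> pt\<tau> a0 a1 n0 n1] .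
  then show ?thesis by (simp add: \<tau>_def v_def)
qed


lemma perp_lemma:
  fixes e u :: "2 \<Rightarrow> complex"
  assumes e: "e \<noteq> (\<lambda>_. 0)" and h: "inner_c (perpv e) u = 0"
  shows "u = (\<lambda>l. (inner_c e u / inner_c e e) * e l)"
proof -
  have ee: "inner_c e e \<noteq> 0" using det2_dag_pos[OF e] by (simp add: inner2)
  have h': "e 1 * u 0 = e 0 * u 1" using h by (simp add: inner2 perpv_def)
  have "u 0 * inner_c e e = inner_c e u * e 0"
    by (simp add: inner2 algebra_simps h')
  moreover have "u 1 * inner_c e e = inner_c e u * e 1"
    by (simp add: inner2 algebra_simps h'[symmetric])
  ultimately show ?thesis using ee by (intro v2_eqI) (simp_all add: field_simps)
qed

lemma solve33:
  fixes B :: "(2,2) op" and e f :: "2 \<Rightarrow> complex"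
  assumes d: "e 0 * f 1 - e 1 * f 0 \<noteq> 0"
  shows "\<exists>y \<beta> \<gamma> \<delta>. y \<noteq> (\<lambda>_. 0) \<and> (\<forall>l. app (dag B) y l + \<gamma> * e l = \<beta> * y l) \<and> (\<forall>l. app B y l + \<delta> * f l = cnj \<beta> * y l)"
proof -
  have enz: "e \<noteq> (\<lambda>_. 0)" using d by auto
  have fnz: "f \<noteq> (\<lambda>_. 0)" using d by auto
  define p where "p = perpv e"
  define q where "q = perpv f"
  define H :: "(2,2) op" where "H = (\<lambda>i j. app B p i * cnj (q j) - p i * (cnj (q 0) * B 0 j + cnj (q 1) * B 1 j))"
  have tr: "H 0 0 + H 1 1 = 0" by (simp add: H_def app2 algebra_simps)
  obtain y where y: "y \<noteq> (\<lambda>_. 0)" "expval H y = 0" using traceless_null[of H, OF tr] by blast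
  define P where "P = inner_c p y"
  define Q where "Q = inner_c q y"
  define RB where "RB = inner_c p (app (dag B) y)"
  define SB where "SB = inner_c q (app B y)"
  have key: "expval H y = cnj RB * Q - cnj P * SB"
    by (simp add: H_def expval2 RB_def Q_def P_def SB_def inner2 app2 dag_def algebra_simps)
  then have key0: "cnj RB * Q = cnj P * SB" using y(2) by simp
  have PQ: "P \<noteq> 0 \<or> Q \<noteq> 0"
  proof (rule ccontr)
    assume "\<not> (P \<noteq> 0 \<or> Q \<noteq> 0)"
    then have h: "e 1 * y 0 = e 0 * y 1" "f 1 * y 0 = f 0 * y 1"
      by (simp_all add: P_def Q_def p_def q_def inner2 perpv_def)
    have "(e 0 * f 1 - e 1 * f 0) * y 0 = e 0 * (f 1 * y 0) - f 0 * (e 1 * y 0)" by (simp add: algebra_simps)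
    also have "\<dots> = e 0 * (f 0 * y 1) - f 0 * (e 0 * y 1)" using h by simp
    also have "\<dots> = 0" by (simp add: algebra_simps)
    finally have "(e 0 * f 1 - e 1 * f 0) * y 0 = 0" .
    moreover have "(e 0 * f 1 - e 1 * f 0) * y 1 = f 1 * (e 0 * y 1) - e 1 * (f 0 * y 1)" by (simp add: algebra_simps)
    moreover have "f 1 * (e 0 * y 1) - e 1 * (f 0 * y 1) = f 1 * (e 1 * y 0) - e 1 * (f 1 * y 0)" using h by simp
    moreover have "f 1 * (e 1 * y 0) - e 1 * (f 1 * y 0) = 0" by (simp add: algebra_simps)
    ultimately have "y 0 = 0" "y 1 = 0" using d by auto
    then show False using y(1) v2_neq[of y] by simp
  qed
  define \<beta> where "\<beta> = (if P \<noteq> 0 then RB / P else cnj (SB / Q))"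
  have h1: "\<beta> * P = RB" and h2: "cnj \<beta> * Q = SB"
  proof -
    show "\<beta> * P = RB"
    proof (cases "P = 0")
      case True
      then have "Q \<noteq> 0" using PQ by simp
      then have "RB = 0" using key0 True by simp
      then show ?thesis using True by simp
    next
      case False then show ?thesis by (simp add: \<beta>_def)
    qed
    show "cnj \<beta> * Q = SB"
    proof (cases "P = 0")
      case True
      then have "Q \<noteq> 0" using PQ by simp
      then show ?thesis using True by (simp add: \<beta>_def)
    next
      case False
      have "cnj \<beta> * Q = cnj RB * Q / cnj P" using False by (simp add: \<beta>_def)
      also have "\<dots> = SB" using key0 False by simp
      finally show ?thesis .
    qed
  qed
  define u where "u = (\<lambda>l. \<beta> * y l - app (dag B) y l)"
  have "inner_c p u = \<beta> * P - RB"
    by (simp add: u_def P_def RB_def inner2 algebra_simps)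
  then have "inner_c (perpv e) u = 0" using h1 p_def by simp
  then have ue: "u = (\<lambda>l. (inner_c e u / inner_c e e) * e l)" using perp_lemma[OF enz] by blast
  define u' where "u' = (\<lambda>l. cnj \<beta> * y l - app B y l)"
  have "inner_c q u' = cnj \<beta> * Q - SB"
    by (simp add: u'_def Q_def SB_def inner2 algebra_simps)
  then have "inner_c (perpv f) u' = 0" using h2 q_def by simp
  then have uf: "u' = (\<lambda>l. (inner_c f u' / inner_c f f) * f l)" using perp_lemma[OF fnz] by blast
  have c1: "\<forall>l. app (dag B) y l + (inner_c e u / inner_c e e) * e l = \<beta> * y l"
  proof
    fix l
    have b: "u l = (inner_c e u / inner_c e e) * e l" using ue by (metis)
    have a: "app (dag B) y l + u l = \<beta> * y l" by (simp add: u_def)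
    from a b show "app (dag B) y l + (inner_c e u / inner_c e e) * e l = \<beta> * y l" by simp
  qed
  have c2: "\<forall>l. app B y l + (inner_c f u' / inner_c f f) * f l = cnj \<beta> * y l"
  proof
    fix l
    have b: "u' l = (inner_c f u' / inner_c f f) * f l" using uf by (metis)
    have a: "app B y l + u' l = cnj \<beta> * y l" by (simp add: u'_def)
    from a b show "app B y l + (inner_c f u' / inner_c f f) * f l = cnj \<beta> * y l" by simp
  qed
  show ?thesis using y(1) c1 c2 by blast
qed

lemma pt_diff: "partial_transpose (\<lambda>p q. A p q - c * Z p q) = (\<lambda>p q. partial_transpose A p q - c * partial_transpose Z p q)"
  by (rule op_eqI) simp

lemma pt_outer_tensv: "partial_transpose (outer (tensv x y) (tensv x y)) = outer (tensv x (conjv y)) (tensv x (conjv y))"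
  by (rule op_eqI) (simp add: outer_def conjv_def mult_ac)

lemma conjv_conjv[simp]: "conjv (conjv y) = y"
  by (simp add: conjv_def)

lemma nb33:
  fixes B C :: "(2,2) op" and e f :: "2 \<Rightarrow> complex"
  assumes C1: "C = (\<lambda>j l. mmul (dag B) B j l + outer e e j l)"
    and C2: "C = (\<lambda>j l. mmul B (dag B) j l + outer f f j l)"
    and d: "e 0 * f 1 - e 1 * f 0 \<noteq> 0"
  shows "separable (nb B C)"
proof -
  obtain y \<beta> \<gamma> \<delta> where y: "y \<noteq> (\<lambda>_. 0)" and c1: "\<forall>l. app (dag B) y l + \<gamma> * e l = \<beta> * y l"
    and c2: "\<forall>l. app B y l + \<delta> * f l = cnj \<beta> * y l"
    using solve33[OF d, of B] by blast
  have enz: "e \<noteq> (\<lambda>_. 0)" using d by auto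
  have fnz: "f \<noteq> (\<lambda>_. 0)" using d by auto
  have cfnz: "conjv f \<noteq> (\<lambda>_. 0)" using fnz by (auto simp: conjv_def fun_eq_iff)
  have yy: "y 0 \<noteq> 0 \<or> y 1 \<noteq> 0" using y v2_neq by blast
  have cyy: "cnj (y 0) \<noteq> 0 \<or> cnj (y 1) \<noteq> 0" using yy by simp
  define x where "x = (\<lambda>i::2. if i = 0 then 1 else \<beta>)"
  define v where "v = Lw B e (y 0) (y 1) \<gamma>"
  define v' where "v' = Lw (transp B) (conjv f) (cnj (y 0)) (cnj (y 1)) (cnj \<delta>)"
  have c1': "y 0 * cnj (B 0 l) + y 1 * cnj (B 1 l) + \<gamma> * e l = \<beta> * y l" for l
    using c1 by (simp add: app2 dag_def mult.commute)
  have c2': "cnj (y 0) * cnj (B l 0) + cnj (y 1) * cnj (B l 1) + cnj \<delta> * cnj (f l) = \<beta> * cnj (y l)" for l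
  proof -
    have "B l 0 * y 0 + B l 1 * y 1 + \<delta> * f l = cnj \<beta> * y l" using c2 by (simp add: app2)
    then have "cnj (B l 0 * y 0 + B l 1 * y 1 + \<delta> * f l) = cnj (cnj \<beta> * y l)" by simp
    then show ?thesis by (simp add: mult.commute)
  qed
  have veq: "v = tensv x y"
    by (rule v4_eqI) (simp_all add: v_def Lw_def x_def bvec_def c1')
  have v'eq: "v' = tensv x (conjv y)"
    by (rule v4_eqI) (simp_all add: v'_def Lw_def x_def bvec_def transp_def conjv_def c2')
  have r1: "rho3 B e = nb B C" by (simp add: rho3_nb C1)
  have tC: "transp C = (\<lambda>j l. mmul (dag (transp B)) (transp B) j l + outer (conjv f) (conjv f) j l)"
    by (rule m2_eqI) (simp_all add: C2 transp_def mmul2 dag_def outer_def conjv_def mult.commute)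
  have r2: "rho3 (transp B) (conjv f) = partial_transpose (nb B C)"
    by (simp add: rho3_nb pt_nb tC)
  have ptv: "partial_transpose (outer v v) = outer v' v'"
    by (simp add: veq v'eq pt_outer_tensv)
  have ptv': "partial_transpose (outer v' v') = outer v v"
    by (simp add: veq v'eq pt_outer_tensv)
  define nw where "nw = (cmod (y 0))^2 + (cmod (y 1))^2 + (cmod \<gamma>)^2"
  define nw' where "nw' = (cmod (cnj (y 0)))^2 + (cmod (cnj (y 1)))^2 + (cmod (cnj \<delta>))^2"
  have nwpos: "0 < nw" using yy by (auto simp: nw_def add_pos_nonneg add_nonneg_pos)
  have nw'pos: "0 < nw'" using yy by (auto simp: nw'_def add_pos_nonneg add_nonneg_pos)
  show ?thesis
  proof (cases "nw' \<le> nw")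
    case True
    define \<tau>1 where "\<tau>1 = (\<lambda>p q. rho3 B e p q - of_real (1/nw) * outer v v p q)"
    have pt1: "partial_transpose \<tau>1 = (\<lambda>p q. rho3 (transp B) (conjv f) p q - of_real (1/nw) * outer v' v' p q)"
      unfolding \<tau>1_def pt_diff ptv r2 r1 ..
    have "psd (partial_transpose \<tau>1)"
      unfolding pt1 v'_def using True nwpos by (intro psd_minus) (auto simp: nw'_def field_simps)
    then have s1: "separable \<tau>1" unfolding \<tau>1_def v_def
      using G3[OF enz yy nw_def] by simp
    have "nb B C = (\<lambda>p q. \<tau>1 p q + of_real (1/nw) * outer (tensv x y) (tensv x y) p q)"
      by (simp add: \<tau>1_def r1 veq)
    then show ?thesis using sep_add_prod[OF s1, of "1/nw" x y] nwpos by simp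
  next
    case False
    define \<tau>1 where "\<tau>1 = (\<lambda>p q. rho3 (transp B) (conjv f) p q - of_real (1/nw') * outer v' v' p q)"
    have pt1: "partial_transpose \<tau>1 = (\<lambda>p q. rho3 B e p q - of_real (1/nw') * outer v v p q)"
      unfolding \<tau>1_def pt_diff ptv' r2 r1 pt_pt ..
    have "psd (partial_transpose \<tau>1)"
      unfolding pt1 v_def using False nw'pos by (intro psd_minus) (auto simp: nw_def field_simps)
    then have s1: "separable \<tau>1" unfolding \<tau>1_def v'_def
      using G3[OF cfnz cyy nw'_def] by simp
    then have s2: "separable (partial_transpose \<tau>1)" by (rule sep_pt)
    have "nb B C = (\<lambda>p q. partial_transpose \<tau>1 p q + of_real (1/nw') * outer (tensv x y) (tensv x y) p q)"
      by (simp add: pt1 r1 veq)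
    then show ?thesis using sep_add_prod[OF s2, of "1/nw'" x y] nw'pos by simp
  qed
qed


definition E00 :: "(2,2) op" where "E00 = (\<lambda>i j. if i = 0 \<and> j = 0 then 1 else 0)"

lemma E00_apply[simp]: "E00 0 0 = 1" "E00 0 1 = 0" "E00 1 0 = 0" "E00 1 1 = 0"
  by (simp_all add: E00_def)

lemma psd_E00: "psd E00"
proof -
  have "E00 = outer (bvec 0) (bvec 0)" by (rule m2_eqI) (simp_all add: outer_def bvec_def)
  then show ?thesis using psd_outer[of "bvec (0::2)"] by metis
qed

lemma det2_real: "psd X \<Longrightarrow> det2 X = of_real (Re (X 0 0) * Re (X 1 1) - (cmod (X 0 1))^2)"
  unfolding psd2_iff det2_def
  by (auto simp: complex_eq_iff cmod_sq power2_eq_square cmod_mult_self)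

lemma stepA:
  fixes X :: "(2,2) op"
  assumes p: "psd X"
  shows "\<exists>t. 0 \<le> t \<and> (\<forall>s. 0 \<le> s \<and> s \<le> t \<longrightarrow> psd (\<lambda>i j. X i j - of_real s * E00 i j)) \<and> det2 (\<lambda>i j. X i j - of_real t * E00 i j) = 0"
proof -
  have r: "X 0 1 = cnj (X 1 0)" "Im (X 0 0) = 0" "Im (X 1 1) = 0" "0 \<le> Re (X 0 0)" "0 \<le> Re (X 1 1)"
     "(cmod (X 0 1))^2 \<le> Re (X 0 0) * Re (X 1 1)" using p psd2_iff by auto
  have crit: "psd (\<lambda>i j. X i j - of_real s * E00 i j) \<longleftrightarrow> 0 \<le> Re (X 0 0) - s \<and> (cmod (X 0 1))^2 \<le> (Re (X 0 0) - s) * Re (X 1 1)" for s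
    using r by (simp add: psd2_iff)
  have dt: "det2 (\<lambda>i j. X i j - of_real s * E00 i j) = of_real ((Re (X 0 0) - s) * Re (X 1 1) - (cmod (X 0 1))^2)" for s
    using r by (simp add: det2_def complex_eq_iff cmod_sq power2_eq_square algebra_simps cmod_mult_self)
  show ?thesis
  proof (cases "Re (X 1 1) = 0")
    case True
    then have "cmod (X 0 1) = 0" using r(6) by simp
    then show ?thesis using True r by (intro exI[of _ "Re (X 0 0)"]) (auto simp: crit dt)
  next
    case False
    then have dpos: "0 < Re (X 1 1)" using r(5) by simp
    define t where "t = Re (X 0 0) - (cmod (X 0 1))^2 / Re (X 1 1)"
    have t0: "0 \<le> t" using r(6) dpos by (simp add: t_def field_simps)
    have "(cmod (X 0 1))^2 \<le> (Re (X 0 0) - s) * Re (X 1 1)" if "s \<le> t" for s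
    proof -
      have "(Re (X 0 0) - t) * Re (X 1 1) = (cmod (X 0 1))^2" using dpos by (simp add: t_def field_simps)
      moreover have "(Re (X 0 0) - t) * Re (X 1 1) \<le> (Re (X 0 0) - s) * Re (X 1 1)"
        using that dpos by (intro mult_right_mono) auto
      ultimately show ?thesis by simp
    qed
    moreover have "0 \<le> Re (X 0 0) - s" if "s \<le> t" for s
      using that t0 dpos r(6) by (simp add: t_def) (smt (verit) divide_nonneg_pos zero_le_power2)
    moreover have "(Re (X 0 0) - t) * Re (X 1 1) - (cmod (X 0 1))^2 = 0" using dpos by (simp add: t_def field_simps)
    ultimately show ?thesis using t0 by (intro exI[of _ t]) (auto simp: crit dt)
  qed
qed

lemma sandwich_diff: "sandwich M (\<lambda>i j. A i j - Z i j) = (\<lambda>i j. sandwich M A i j - sandwich M Z i j)"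
  by (simp add: sandwich_def right_diff_distrib left_diff_distrib sum_subtractf)

lemma sandwich_add: "sandwich M (\<lambda>i j. A i j + Z i j) = (\<lambda>i j. sandwich M A i j + sandwich M Z i j)"
  by (simp add: sandwich_def distrib_left distrib_right sum.distrib)

lemma sandwich_scale: "sandwich M (\<lambda>i j. c * A i j) = (\<lambda>i j. c * sandwich M A i j)"
  by (simp add: sandwich_def sum_distrib_left mult_ac)

lemma sandwich_zero: "sandwich M (\<lambda>i j. 0) = (\<lambda>i j. 0)"
  by (simp add: sandwich_def)

lemma sandwich_outer: "sandwich M (outer u u) = outer (app M u) (app M u)"
  using sandwich_outer_sum[of M "\<lambda>_. 1" "\<lambda>_. u" "{()}"] by simp

lemma det2_sandwich: "det2 (sandwich M X) = det2 M * det2 X * cnj (det2 M)"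
  by (simp add: det2_def sandwich_def sum2 algebra_simps)

lemma sandwich_inv: "mmul Mi M = id_op \<Longrightarrow> sandwich Mi (sandwich M X) = (X :: ('x::finite,'x) op)"
  by (simp add: sandwich_sandwich sandwich_id)


lemma stepB:
  fixes X Y :: "(2,2) op"
  assumes pX: "psd X" and dX: "det2 X = 0" and pY: "psd Y"
  shows "\<exists>G. psd G \<and> psd (\<lambda>i j. X i j - G i j) \<and> psd (\<lambda>i j. Y i j - G i j) \<and>
     ((\<lambda>i j. X i j - G i j) = (\<lambda>i j. 0) \<or> (det2 (\<lambda>i j. X i j - G i j) = 0 \<and> det2 (\<lambda>i j. Y i j - G i j) = 0))"
proof -
  obtain x where X: "X = outer x x" using psd2_rank1[OF pX dX] by blast
  show ?thesis
  proof (cases "x = (\<lambda>_. 0)")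
    case True
    then have "X = (\<lambda>i j. 0)" using X by (simp add: outer_def)
    then show ?thesis using psd_zero pY by (intro exI[of _ "\<lambda>i j. 0"]) simp
  next
    case False
    define U0 :: "(2,2) op" where "U0 = (\<lambda>i j. if i = 0 then cnj (x j) else (if j = 0 then - x 1 else x 0))"
    define c where "c = cnj (x 0) * x 0 + cnj (x 1) * x 1"
    have cnz: "c \<noteq> 0" using det2_dag_pos[OF False] c_def by simp
    have dU: "det2 U0 = c" by (simp add: det2_def U0_def c_def)
    define Ui where "Ui = inv2 U0"
    have inv: "mmul Ui U0 = id_op" using mmul_inv2[of U0] dU cnz Ui_def by simp
    have aU: "app U0 x = (\<lambda>i. if i = 0 then c else 0)"
      by (rule v2_eqI) (simp_all add: app2 U0_def c_def)
    define cc where "cc = (cmod c)^2"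
    have cc2: "c * cnj c = (complex_of_real (cmod c))^2" using complex_norm_square[of c] by simp
    have X': "sandwich U0 X = (\<lambda>i j. of_real cc * E00 i j)"
      unfolding X sandwich_outer aU cc_def
      by (rule m2_eqI) (simp_all add: outer_def cc2)
    define Y' where "Y' = sandwich U0 Y"
    have pY': "psd Y'" using psd_sandwich[OF pY] Y'_def by simp
    obtain tY where tY: "0 \<le> tY" "\<forall>s. 0 \<le> s \<and> s \<le> tY \<longrightarrow> psd (\<lambda>i j. Y' i j - of_real s * E00 i j)"
      "det2 (\<lambda>i j. Y' i j - of_real tY * E00 i j) = 0" using stepA[OF pY'] by blast
    define t where "t = min cc tY"
    have t0: "0 \<le> t" using tY(1) by (simp add: t_def cc_def)
    have eX: "(\<lambda>i j. sandwich U0 X i j - of_real t * E00 i j) = (\<lambda>i j. of_real (cc - t) * E00 i j)"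
      unfolding X' by (simp add: algebra_simps)
    have pX1: "psd (\<lambda>i j. sandwich U0 X i j - of_real t * E00 i j)"
      unfolding eX using psd_E00 t_def by (intro psd_scale) auto
    have pY1: "psd (\<lambda>i j. Y' i j - of_real t * E00 i j)" using tY(2) t0 t_def by simp
    define G where "G = sandwich Ui (\<lambda>i j. of_real t * E00 i j)"
    have pG: "psd G" unfolding G_def using psd_E00 t0 by (intro psd_sandwich psd_scale)
    have XG: "(\<lambda>i j. X i j - G i j) = sandwich Ui (\<lambda>i j. sandwich U0 X i j - of_real t * E00 i j)"
      unfolding sandwich_diff G_def sandwich_inv[OF inv] ..
    have YG: "(\<lambda>i j. Y i j - G i j) = sandwich Ui (\<lambda>i j. Y' i j - of_real t * E00 i j)"
      unfolding sandwich_diff G_def Y'_def sandwich_inv[OF inv] ..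
    have "(\<lambda>i j. X i j - G i j) = (\<lambda>i j. 0) \<or> (det2 (\<lambda>i j. X i j - G i j) = 0 \<and> det2 (\<lambda>i j. Y i j - G i j) = 0)"
    proof (cases "t = cc")
      case True
      then have "(\<lambda>i j. sandwich U0 X i j - of_real t * E00 i j) = (\<lambda>i j. 0)" unfolding eX by simp
      then show ?thesis unfolding XG by (simp add: sandwich_zero)
    next
      case False
      then have "t = tY" by (simp add: t_def min_def split: if_splits)
      then have "det2 (\<lambda>i j. Y' i j - of_real t * E00 i j) = 0" using tY(3) by simp
      moreover have "det2 (\<lambda>i j. sandwich U0 X i j - of_real t * E00 i j) = 0"
        unfolding eX by (simp add: det2_def)
      ultimately show ?thesis unfolding XG YG det2_sandwich by simp
    qed
    moreover have "psd (\<lambda>i j. X i j - G i j)" unfolding XG by (rule psd_sandwich[OF pX1])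
    moreover have "psd (\<lambda>i j. Y i j - G i j)" unfolding YG by (rule psd_sandwich[OF pY1])
    ultimately show ?thesis using pG by blast
  qed
qed

lemma reduce2:
  fixes E F :: "(2,2) op"
  assumes pE: "psd E" and pF: "psd F"
  shows "\<exists>G. psd G \<and> psd (\<lambda>i j. E i j - G i j) \<and> psd (\<lambda>i j. F i j - G i j) \<and>
     ((\<lambda>i j. E i j - G i j) = (\<lambda>i j. 0) \<or> (\<lambda>i j. F i j - G i j) = (\<lambda>i j. 0) \<or>
      (det2 (\<lambda>i j. E i j - G i j) = 0 \<and> det2 (\<lambda>i j. F i j - G i j) = 0))"
proof -
  obtain tE where tE: "0 \<le> tE" "\<forall>s. 0 \<le> s \<and> s \<le> tE \<longrightarrow> psd (\<lambda>i j. E i j - of_real s * E00 i j)"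
      "det2 (\<lambda>i j. E i j - of_real tE * E00 i j) = 0" using stepA[OF pE] by blast
  obtain tF where tF: "0 \<le> tF" "\<forall>s. 0 \<le> s \<and> s \<le> tF \<longrightarrow> psd (\<lambda>i j. F i j - of_real s * E00 i j)"
      "det2 (\<lambda>i j. F i j - of_real tF * E00 i j) = 0" using stepA[OF pF] by blast
  define t where "t = min tE tF"
  define E1 where "E1 = (\<lambda>i j. E i j - of_real t * E00 i j)"
  define F1 where "F1 = (\<lambda>i j. F i j - of_real t * E00 i j)"
  have pE1: "psd E1" using tE tF E1_def t_def by simp
  have pF1: "psd F1" using tE tF F1_def t_def by simp
  have pG1: "psd (\<lambda>i j. of_real t * E00 i j)" using psd_E00 tE tF t_def by (intro psd_scale) auto
  have dd: "det2 E1 = 0 \<or> det2 F1 = 0" using tE(3) tF(3) E1_def F1_def t_def by (auto simp: min_def)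
  have eqE: "(\<lambda>i j. E i j - (of_real t * E00 i j + G2 i j)) = (\<lambda>i j. E1 i j - G2 i j)" for G2 :: "(2,2) op"
    by (simp add: E1_def algebra_simps)
  have eqF: "(\<lambda>i j. F i j - (of_real t * E00 i j + G2 i j)) = (\<lambda>i j. F1 i j - G2 i j)" for G2 :: "(2,2) op"
    by (simp add: F1_def algebra_simps)
  show ?thesis
  proof (cases "det2 E1 = 0")
    case True
    obtain G2 where G2: "psd G2" "psd (\<lambda>i j. E1 i j - G2 i j)" "psd (\<lambda>i j. F1 i j - G2 i j)"
      "(\<lambda>i j. E1 i j - G2 i j) = (\<lambda>i j. 0) \<or> (det2 (\<lambda>i j. E1 i j - G2 i j) = 0 \<and> det2 (\<lambda>i j. F1 i j - G2 i j) = 0)"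
      using stepB[OF pE1 True pF1] by blast
    show ?thesis
      by (intro exI[of _ "\<lambda>i j. of_real t * E00 i j + G2 i j"]) (use G2 pG1 psd_add eqE eqF in auto)
  next
    case False
    then have dF: "det2 F1 = 0" using dd by simp
    obtain G2 where G2: "psd G2" "psd (\<lambda>i j. F1 i j - G2 i j)" "psd (\<lambda>i j. E1 i j - G2 i j)"
      "(\<lambda>i j. F1 i j - G2 i j) = (\<lambda>i j. 0) \<or> (det2 (\<lambda>i j. F1 i j - G2 i j) = 0 \<and> det2 (\<lambda>i j. E1 i j - G2 i j) = 0)"
      using stepB[OF pF1 dF pE1] by blast
    show ?thesis
      by (intro exI[of _ "\<lambda>i j. of_real t * E00 i j + G2 i j"]) (use G2 pG1 psd_add eqE eqF in auto)
  qed
qed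


lemma par_outer:
  fixes e f :: "2 \<Rightarrow> complex"
  assumes d: "e 0 * f 1 - e 1 * f 0 = 0"
    and tr: "cnj (e 0) * e 0 + cnj (e 1) * e 1 = cnj (f 0) * f 0 + cnj (f 1) * f 1"
  shows "outer e e = outer f f"
proof (cases "e = (\<lambda>_. 0)")
  case True
  then have "cnj (f 0) * f 0 + cnj (f 1) * f 1 = 0" using tr by simp
  then have "f = (\<lambda>_. 0)" using det2_dag_pos by blast
  then show ?thesis using True by (simp add: outer_def)
next
  case False
  have "\<exists>c. f = (\<lambda>i. c * e i)"
  proof (cases "e 0 = 0")
    case True
    then have e1: "e 1 \<noteq> 0" using False v2_neq by blast
    have "f 0 = 0" using d True e1 by simp
    then show ?thesis using True e1 by (intro exI[of _ "f 1 / e 1"] v2_eqI) simp_all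
  next
    case f0: False
    have "f 1 = f 0 / e 0 * e 1" using d f0 by (simp add: field_simps)
    then show ?thesis using f0 by (intro exI[of _ "f 0 / e 0"] v2_eqI) simp_all
  qed
  then obtain c where c: "f = (\<lambda>i. c * e i)" by blast
  define N where "N = cnj (e 0) * e 0 + cnj (e 1) * e 1"
  have N: "N \<noteq> 0" using det2_dag_pos[OF False] N_def by simp
  have "cnj (f 0) * f 0 + cnj (f 1) * f 1 = cnj c * c * N" by (simp add: c N_def algebra_simps)
  then have "N = cnj c * c * N" using tr N_def by simp
  then have cc: "cnj c * c = 1" using N by simp
  then have cc': "c * cnj c = 1" by (simp add: mult.commute)
  show ?thesis
  proof (intro ext)
    fix i j
    have "outer f f i j = (c * cnj c) * (e i * cnj (e j))" by (simp add: outer_def c algebra_simps)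
    then show "outer e e i j = outer f f i j" by (simp add: cc' outer_def)
  qed
qed

lemma trace_CsFs: "Cs B C 0 0 + Cs B C 1 1 = Fs B C 0 0 + Fs B C 1 1"
  by (simp add: Cs_def Fs_def mmul2 dag_def algebra_simps)

lemma normmain:
  fixes B C :: "(2,2) op"
  assumes pE: "psd (Cs B C)" and pF: "psd (Fs B C)"
  shows "separable (nb B C)"
proof -
  obtain G where G: "psd G" "psd (\<lambda>i j. Cs B C i j - G i j)" "psd (\<lambda>i j. Fs B C i j - G i j)"
     "(\<lambda>i j. Cs B C i j - G i j) = (\<lambda>i j. 0) \<or> (\<lambda>i j. Fs B C i j - G i j) = (\<lambda>i j. 0) \<or>
      (det2 (\<lambda>i j. Cs B C i j - G i j) = 0 \<and> det2 (\<lambda>i j. Fs B C i j - G i j) = 0)"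
    using reduce2[OF pE pF] by blast
  define C' where "C' = (\<lambda>j l. C j l - G j l)"
  have CsC': "Cs B C' = (\<lambda>i j. Cs B C i j - G i j)" by (simp add: Cs_def C'_def algebra_simps)
  have FsC': "Fs B C' = (\<lambda>i j. Fs B C i j - G i j)" by (simp add: Fs_def C'_def algebra_simps)
  have split: "nb B C = (\<lambda>x y. nb B C' x y + low G x y)" unfolding C'_def by (rule nb_split)
  have "separable (nb B C')"
  proof -
    consider "Cs B C' = (\<lambda>i j. 0)" | "Fs B C' = (\<lambda>i j. 0)" | "det2 (Cs B C') = 0 \<and> det2 (Fs B C') = 0"
      using G(4) CsC' FsC' by auto
    then show ?thesis
    proof cases
      case 1 then show ?thesis using nbE0 G(3) FsC' by simp
    next
      case 2 then show ?thesis using nbF0 G(2) CsC' by simp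
    next
      case 3
      obtain e where e: "Cs B C' = outer e e" using psd2_rank1 G(2) CsC' 3 by metis
      obtain f where f: "Fs B C' = outer f f" using psd2_rank1 G(3) FsC' 3 by metis
      have "C' j l - mmul (dag B) B j l = outer e e j l" for j l
        using fun_cong[OF fun_cong[OF e, of j], of l] by (simp add: Cs_def)
      then have C1: "C' = (\<lambda>j l. mmul (dag B) B j l + outer e e j l)"
        by (intro ext) (simp add: diff_eq_eq add.commute)
      have "C' j l - mmul B (dag B) j l = outer f f j l" for j l
        using fun_cong[OF fun_cong[OF f, of j], of l] by (simp add: Fs_def)
      then have C2: "C' = (\<lambda>j l. mmul B (dag B) j l + outer f f j l)"
        by (intro ext) (simp add: diff_eq_eq add.commute)
      show ?thesis
      proof (cases "e 0 * f 1 - e 1 * f 0 = 0")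
        case False then show ?thesis using nb33[OF C1 C2] by simp
      next
        case True
        have "cnj (e 0) * e 0 + cnj (e 1) * e 1 = cnj (f 0) * f 0 + cnj (f 1) * f 1"
          using trace_CsFs[of B C'] e f by (simp add: outer_def mult.commute)
        then have ef: "outer e e = outer f f" using par_outer[OF True] by simp
        define C'' where "C'' = (\<lambda>j l. C' j l - outer e e j l)"
        have z1: "Cs B C'' = (\<lambda>i j. 0)" by (simp add: Cs_def C''_def C1)
        have z2: "Fs B C'' = (\<lambda>i j. 0)" by (simp add: Fs_def C''_def ef) (simp add: C2)
        have "psd (Fs B C'')" unfolding z2 by (rule psd_zero)
        then have s1: "separable (nb B C'')" using nbE0 z1 by blast
        have eq: "nb B C' = (\<lambda>x y. nb B C'' x y + low (outer e e) x y)"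
          unfolding C''_def by (rule nb_split)
        show ?thesis unfolding eq by (rule sep_add[OF s1 sep_low[OF psd_outer]])
      qed
    qed
  qed
  then show ?thesis unfolding split by (rule sep_add[OF _ sep_low[OF G(1)]])
qed


lemma chol:
  fixes A :: "(2,2) op"
  assumes p: "psd A" and d: "det2 A \<noteq> 0"
  shows "\<exists>N. det2 N \<noteq> 0 \<and> sandwich N A = id_op"
proof -
  have r: "A 0 1 = cnj (A 1 0)" "Im (A 0 0) = 0" "Im (A 1 1) = 0" "0 \<le> Re (A 0 0)" "0 \<le> Re (A 1 1)"
     "(cmod (A 0 1))^2 \<le> Re (A 0 0) * Re (A 1 1)" using p psd2_iff by auto
  define a where "a = Re (A 0 0)"
  define dd where "dd = Re (A 1 1)"
  define b where "b = A 1 0"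
  have A00: "A 0 0 = of_real a" using r a_def by (simp add: complex_eq_iff)
  have A11: "A 1 1 = of_real dd" using r dd_def by (simp add: complex_eq_iff)
  have A01: "A 0 1 = cnj b" using r b_def by simp
  define D where "D = a * dd - (cmod b)^2"
  have det: "det2 A = of_real D"
    unfolding det2_def A00 A11 A01 b_def[symmetric] D_def
    by (simp add: cmodsq2[symmetric] power2_eq_square mult.commute)
  have Dnn: "0 \<le> D" using r(6) A01 by (simp add: D_def a_def dd_def)
  have Dpos: "0 < D" using Dnn d det by (cases "D = 0") auto
  have apos: "0 < a"
  proof (rule ccontr)
    assume "\<not> 0 < a"
    then have "a = 0" using r(4) a_def by simp
    then show False using Dpos D_def by (simp add: zero_le_power2 not_less[symmetric])
  qed
  define sA where "sA = complex_of_real (sqrt a)"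
  define sD where "sD = complex_of_real (sqrt D)"
  have sA: "sA * sA = of_real a" "sA \<noteq> 0" using apos of_real_sqrt_sq[of a] by (auto simp: sA_def)
  have sD: "sD * sD = of_real D" "sD \<noteq> 0" using Dpos of_real_sqrt_sq[of D] by (auto simp: sD_def)
  have bb: "b * cnj b = of_real a * of_real dd - of_real D"
    by (simp add: D_def cmodsq2[symmetric] power2_eq_square)
  have cs: "cnj sA = sA" "cnj sD = sD" by (simp_all add: sA_def sD_def)
  have bb': "b * (cnj b * x) = (of_real a * of_real dd - of_real D) * x" for x by (simp add: bb[symmetric] mult.assoc)
  have sA': "sA * (sA * x) = of_real a * x" for x by (simp add: sA(1) mult.assoc[symmetric])
  have sD': "sD * (sD * x) = of_real D * x" for x by (simp add: sD(1) mult.assoc[symmetric])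
  define N :: "(2,2) op" where "N = (\<lambda>i j. if i = 0 then (if j = 0 then 1 / sA else 0) else (if j = 0 then - b / (sA * sD) else sA / sD))"
  have "sandwich N A = id_op"
  proof (rule m2_eqI)
    show "sandwich N A 0 0 = (id_op :: (2,2) op) 0 0"
      using sA apos by (simp add: sandwich_def sum2 N_def A00 id_op2 cs field_simps)
    show "sandwich N A 0 1 = (id_op :: (2,2) op) 0 1"
      using sA sD by (simp add: sandwich_def sum2 N_def A00 A01 id_op2 cs field_simps)
    show "sandwich N A 1 0 = (id_op :: (2,2) op) 1 0"
      using sA sD apos Dpos by (simp add: sandwich_def sum2 N_def A00 b_def[symmetric] id_op2 cs field_simps sA' sD')
    show "sandwich N A 1 1 = (id_op :: (2,2) op) 1 1"
      using sA sD apos Dpos by (simp add: sandwich_def sum2 N_def A00 A01 A11 b_def[symmetric] cs field_simps sA' sD' bb bb' id_op2)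
  qed
  moreover have "det2 N \<noteq> 0" using sA sD by (simp add: det2_def N_def)
  ultimately show ?thesis by blast
qed

lemma blk_sandwich_id:
  fixes \<tau> :: "(2 \<times> 2, 2 \<times> 2) op"
  shows "blk (sandwich (tensor_op id_op N) \<tau>) i k = sandwich N (blk \<tau> i k)"
proof (intro ext)
  fix j l
  show "blk (sandwich (tensor_op id_op N) \<tau>) i k j l = sandwich N (blk \<tau> i k) j l"
    using two_cases[of i] two_cases[of k]
    by (auto simp: blk_def sandwich_def sum_prod_UNIV sum2 id_op2)
qed

theorem horodecki:
  fixes \<tau> :: "(2 \<times> 2, 2 \<times> 2) op"
  assumes p: "psd \<tau>" and pt: "psd (partial_transpose \<tau>)"
  shows "separable \<tau>"
proof (cases "det2 (blk \<tau> 0 0) = 0")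
  case True
  obtain z where z: "z \<noteq> (\<lambda>_. 0)" "expval (blk \<tau> 0 0) z = 0"
    using psd2_sing_kernel[OF psd_blk[OF p] True] by blast
  have "bvec (0::2) \<noteq> (\<lambda>_. 0)" by (auto simp: bvec_def fun_eq_iff)
  then show ?thesis using singA[OF p pt _ z(1)] z(2) expval_tensv_bvec by metis
next
  case False
  obtain N where N: "det2 N \<noteq> 0" "sandwich N (blk \<tau> 0 0) = id_op"
    using chol[OF psd_blk[OF p] False] by blast
  define \<tau>' where "\<tau>' = sandwich (tensor_op id_op N) \<tau>"
  have p': "psd \<tau>'" using psd_sandwich[OF p] \<tau>'_def by simp
  have pt': "psd (partial_transpose \<tau>')" using psd_sandwich[OF pt] by (simp add: \<tau>'_def pt_sandwich)
  have b0: "blk \<tau>' 0 0 = id_op" using N(2) by (simp add: \<tau>'_def blk_sandwich_id)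
  have eq: "\<tau>' = nb (blk \<tau>' 0 1) (blk \<tau>' 1 1)" using nb_of[OF p' b0] .
  have "psd (Cs (blk \<tau>' 0 1) (blk \<tau>' 1 1)) \<and> psd (Fs (blk \<tau>' 0 1) (blk \<tau>' 1 1))"
    using ppt_nb_iff p' pt' eq by metis
  then have "separable \<tau>'" using normmain eq by metis
  then show ?thesis using sep_filter_inv[of id_op N \<tau> id_op "inv2 N"] mmul_inv2[OF N(1)]
    by (simp add: \<tau>'_def mmul_id_left)
qed

lemma sum_lt2: "(\<Sum>t<(2::nat). f t) = f 0 + f 1"
  by (simp add: numeral_2_eq_2)

lemma eigvec2:
  fixes G :: "(2,2) op"
  shows "\<exists>u lam. cnj (u 0) * u 0 + cnj (u 1) * u 1 = 1 \<and> app G u = (\<lambda>i. lam * u i)"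
proof (cases "G 0 1 = 0")
  case True
  have "app G (bvec 1) = (\<lambda>i. G 1 1 * bvec 1 i)"
    using True by (intro v2_eqI) (simp_all add: app2 bvec_def)
  then show ?thesis by (intro exI[of _ "bvec 1"] exI[of _ "G 1 1"]) (simp add: bvec_def)
next
  case False
  obtain lam where lam: "1 * lam^2 + (- (G 0 0 + G 1 1)) * lam + (G 0 0 * G 1 1 - G 0 1 * G 1 0) = 0"
    using quad_root[of 1 "- (G 0 0 + G 1 1)" "G 0 0 * G 1 1 - G 0 1 * G 1 0"] by auto
  define v where "v = (\<lambda>i::2. if i = 0 then G 0 1 else lam - G 0 0)"
  have av: "app G v = (\<lambda>i. lam * v i)"
  proof (rule v2_eqI)
    show "app G v 0 = lam * v 0" by (simp add: app2 v_def algebra_simps)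
    have "G 1 0 * G 0 1 + G 1 1 * (lam - G 0 0) = lam * (lam - G 0 0)"
      using lam by (simp add: power2_eq_square algebra_simps)
    then show "app G v 1 = lam * v 1" by (simp add: app2 v_def)
  qed
  define n where "n = cnj (v 0) * v 0 + cnj (v 1) * v 1"
  have vnz: "v \<noteq> (\<lambda>_. 0)" using False v2_neq by (auto simp: v_def)
  have nnz: "n \<noteq> 0" using det2_dag_pos[OF vnz] n_def by simp
  have nreal: "n = of_real (Re n)" "0 < Re n"
  proof -
    have "n = of_real ((cmod (v 0))^2 + (cmod (v 1))^2)" by (simp add: n_def sum_cnj_mult_self)
    then show "n = of_real (Re n)" by simp
    show "0 < Re n"
      using \<open>n = of_real ((cmod (v 0))^2 + (cmod (v 1))^2)\<close> nnz
      by (metis Re_complex_of_real add_nonneg_nonneg less_eq_real_def of_real_0 zero_le_power2)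
  qed
  define r where "r = complex_of_real (sqrt (Re n))"
  have rr: "r * r = n" "r \<noteq> 0" "cnj r = r"
    using of_real_sqrt_sq[of "Re n"] nreal by (auto simp: r_def)
  define u where "u = (\<lambda>i. v i / r)"
  have "cnj (u 0) * u 0 + cnj (u 1) * u 1 = n / (r * r)"
    by (simp add: u_def n_def rr(3) field_simps add_divide_distrib)
  then have un: "cnj (u 0) * u 0 + cnj (u 1) * u 1 = 1" using rr nnz by simp
  have "app G u = (\<lambda>i. lam * u i)"
    using av rr(2) by (intro v2_eqI) (simp_all add: app2 u_def field_simps fun_eq_iff)
  then show ?thesis using un by blast
qed


lemma inner_cnj: "inner_c x y = cnj (inner_c y x)"
  by (simp add: inner_c_def cnj_sum mult.commute)

lemma inner_scale_r: "inner_c x (\<lambda>j. c * y j) = c * inner_c x y"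
  by (simp add: inner_c_def sum_distrib_left mult_ac)

lemma inner_scale_l: "inner_c (\<lambda>j. c * x j) y = cnj c * inner_c x y"
  by (simp add: inner_c_def sum_distrib_left mult_ac)

lemma inner_conjv: "inner_c (conjv x) (conjv y) = cnj (inner_c x y)"
  by (simp add: inner_c_def conjv_def cnj_sum mult.commute)

lemma inner_add_l: "inner_c (\<lambda>j. x j + y j) z = inner_c x z + inner_c y z"
  by (simp add: inner_c_def distrib_right sum.distrib)

lemma inner_add_r: "inner_c z (\<lambda>j. x j + y j) = inner_c z x + inner_c z y"
  by (simp add: inner_c_def distrib_left sum.distrib)

lemma inner_self: "inner_c x x = of_real (\<Sum>j\<in>UNIV. (cmod (x j))^2)"
  by (simp add: inner_c_def sum_cnj_mult_self)

lemma inner_self_zero: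
  fixes x :: "'x::finite \<Rightarrow> complex"
  assumes "inner_c x x = 0" shows "x = (\<lambda>_. 0)"
proof -
  have "(\<Sum>j\<in>UNIV. (cmod (x j))^2) = 0" using assms inner_self[of x] of_real_eq_0_iff by metis
  then have "\<forall>j\<in>UNIV. (cmod (x j))^2 = 0" by (subst sum_nonneg_eq_0_iff[symmetric]) auto
  then show ?thesis by auto
qed

lemma schmidt2:
  fixes \<psi> :: "2 \<times> 'b::finite \<Rightarrow> complex"
  shows "(\<exists>a b. \<psi> = tensv a b) \<or>
    (\<exists>(s::nat \<Rightarrow> real) (a::nat \<Rightarrow> 2 \<Rightarrow> complex) (b::nat \<Rightarrow> 'b \<Rightarrow> complex). 0 < s 0 \<and> 0 < s 1 \<and>
       orthonormal2 (a 0) (a 1) \<and> orthonormal2 (b 0) (b 1) \<and>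
       \<psi> = (\<lambda>(i,j). \<Sum>t<2. complex_of_real (s t) * a t i * b t j))"
proof -
  define G :: "(2,2) op" where "G = (\<lambda>i k. inner_c (\<lambda>j. \<psi> (i,j)) (\<lambda>j. \<psi> (k,j)))"
  define \<chi> where "\<chi> v = (\<lambda>j. v 0 * \<psi> (0,j) + v 1 * \<psi> (1,j))" for v :: "2 \<Rightarrow> complex"
  have ichi: "inner_c (\<chi> v) (\<chi> v') = inner_c v (app G v')" for v v'
  proof -
    have "inner_c (\<chi> v) (\<chi> v') = cnj (v 0) * (v' 0 * G 0 0 + v' 1 * G 0 1) + cnj (v 1) * (v' 0 * G 1 0 + v' 1 * G 1 1)"
      unfolding \<chi>_def G_def inner_add_l inner_add_r inner_scale_l inner_scale_r by (simp add: algebra_simps)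
    then show ?thesis by (simp add: inner2 app2 algebra_simps)
  qed
  have Gh: "G i k = cnj (G k i)" for i k by (simp add: G_def inner_cnj[of "\<lambda>j. \<psi> (i,j)"])
  obtain u lam where u: "cnj (u 0) * u 0 + cnj (u 1) * u 1 = 1" "app G u = (\<lambda>i. lam * u i)"
    using eigvec2[of G] by blast
  define w where "w = (\<lambda>i::2. if i = 0 then - cnj (u 1) else cnj (u 0))"
  have uu: "inner_c u u = 1" using u(1) by (simp add: inner2)
  have ww: "inner_c w w = 1" using u(1) by (simp add: inner2 w_def algebra_simps)
  have uw: "inner_c u w = 0" by (simp add: inner2 w_def algebra_simps)
  have wu: "inner_c w u = 0" by (simp add: inner2 w_def algebra_simps)
  have g: "G 1 0 = cnj (G 0 1)" "cnj (G 0 0) = G 0 0" "cnj (G 1 1) = G 1 1"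
    using Gh[of 1 0] Gh[of 0 0] Gh[of 1 1] by (metis complex_cnj_cnj)+
  have hermG: "inner_c u (app G w) = cnj (inner_c w (app G u))"
    by (simp add: inner2 app2 g algebra_simps)
  have orth: "inner_c (\<chi> u) (\<chi> w) = 0"
    unfolding ichi hermG u(2) inner_scale_r wu by simp
  have orth': "inner_c (\<chi> w) (\<chi> u) = 0" using orth inner_cnj by (metis complex_cnj_zero)
  have dec: "\<psi> = (\<lambda>(i,j). cnj (u i) * \<chi> u j + cnj (w i) * \<chi> w j)"
  proof (intro ext, clarify)
    fix i j
    have h0: "cnj (u 0) * u 0 + cnj (w 0) * w 0 = 1" "cnj (u 0) * u 1 + cnj (w 0) * w 1 = 0"
      "cnj (u 1) * u 0 + cnj (w 1) * w 0 = 0" "cnj (u 1) * u 1 + cnj (w 1) * w 1 = 1"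
      using u(1) by (simp_all add: w_def algebra_simps)
    have "cnj (u i) * \<chi> u j + cnj (w i) * \<chi> w j =
       (cnj (u i) * u 0 + cnj (w i) * w 0) * \<psi> (0,j) + (cnj (u i) * u 1 + cnj (w i) * w 1) * \<psi> (1,j)"
      by (simp add: \<chi>_def algebra_simps)
    then show "\<psi> (i, j) = cnj (u i) * \<chi> u j + cnj (w i) * \<chi> w j"
      using two_cases[of i] h0 by auto
  qed
  define NU where "NU = (\<Sum>j\<in>UNIV. (cmod (\<chi> u j))^2)"
  define NW where "NW = (\<Sum>j\<in>UNIV. (cmod (\<chi> w j))^2)"
  have iu: "inner_c (\<chi> u) (\<chi> u) = of_real NU" by (simp add: NU_def inner_self)
  have iw: "inner_c (\<chi> w) (\<chi> w) = of_real NW" by (simp add: NW_def inner_self)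
  have NU0: "0 \<le> NU" "0 \<le> NW" by (simp_all add: NU_def NW_def sum_nonneg)
  show ?thesis
  proof (cases "NU = 0")
    case True
    then have "\<chi> u = (\<lambda>_. 0)" using inner_self_zero iu by simp
    then have "\<psi> = tensv (conjv w) (\<chi> w)" unfolding dec by (intro ext) (auto simp: conjv_def)
    then show ?thesis by blast
  next
    case nu: False
    show ?thesis
    proof (cases "NW = 0")
      case True
      then have "\<chi> w = (\<lambda>_. 0)" using inner_self_zero iw by simp
      then have "\<psi> = tensv (conjv u) (\<chi> u)" unfolding dec by (intro ext) (auto simp: conjv_def)
      then show ?thesis by blast
    next
      case nw: False
      have pu: "0 < NU" "0 < NW" using nu nw NU0 by auto
      define s where "s = (\<lambda>t::nat. if t = 0 then sqrt NU else sqrt NW)"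
      define a where "a = (\<lambda>t::nat. if t = 0 then conjv u else conjv w)"
      define b where "b = (\<lambda>t::nat. if t = 0 then (\<lambda>j. complex_of_real (1 / sqrt NU) * \<chi> u j) else (\<lambda>j. complex_of_real (1 / sqrt NW) * \<chi> w j))"
      have oa: "orthonormal2 (a 0) (a 1)"
        by (simp add: orthonormal2_def a_def inner_conjv uu ww uw)
      have sq: "complex_of_real (1 / sqrt x) * complex_of_real (1 / sqrt x) * complex_of_real x = 1" if "0 < x" for x
        using that of_real_sqrt_sq[of x] by (simp add: field_simps)
      have sq': "cnj (complex_of_real (1 / sqrt x)) * (complex_of_real (1 / sqrt x) * complex_of_real x) = 1" if "0 < x" for x
      proof -
        have "sqrt x * sqrt x = x" using that by simp
        then have "(1 / sqrt x) * ((1 / sqrt x) * x) = 1" using that by (simp add: field_simps)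
        then show ?thesis by (metis Complex.complex_cnj_complex_of_real of_real_1 of_real_mult)
      qed
      have b0: "b 0 = (\<lambda>j. complex_of_real (1 / sqrt NU) * \<chi> u j)" by (simp add: b_def)
      have b1: "b 1 = (\<lambda>j. complex_of_real (1 / sqrt NW) * \<chi> w j)" by (simp add: b_def)
      have ob: "orthonormal2 (b 0) (b 1)"
        unfolding orthonormal2_def b0 b1 inner_scale_l inner_scale_r iu iw orth sq'[OF pu(1)] sq'[OF pu(2)]
        by simp
      have "\<psi> = (\<lambda>(i,j). \<Sum>t<2. complex_of_real (s t) * a t i * b t j)"
      proof (intro ext, clarify)
        fix i j
        have e1: "complex_of_real (sqrt x) * complex_of_real (1 / sqrt x) = 1" if "0 < x" for x
          using that by (simp add: field_simps)
        show "\<psi> (i, j) = (\<Sum>t<2. complex_of_real (s t) * a t i * b t j)"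
          unfolding sum_lt2 using e1[OF pu(1)] e1[OF pu(2)] nu nw
          by (subst dec) (simp add: s_def a_def b_def conjv_def algebra_simps)
      qed
      then show ?thesis using oa ob pu by (intro disjI2 exI[of _ s] exI[of _ a] exI[of _ b]) (simp add: s_def)
    qed
  qed
qed

lemma expval_pt_prod:
  fixes \<sigma> :: "('a::finite \<times> 'b::finite, 'a \<times> 'b) op"
  shows "expval (partial_transpose \<sigma>) (tensv a b) = expval \<sigma> (tensv a (conjv b))"
proof -
  have L: "expval (partial_transpose \<sigma>) (tensv a b) =
    (\<Sum>i\<in>UNIV. \<Sum>j\<in>UNIV. \<Sum>k\<in>UNIV. \<Sum>l\<in>UNIV. cnj (a i) * cnj (b j) * \<sigma> (i, l) (k, j) * a k * b l)"
    by (simp add: expval_def sum_prod_UNIV sum_distrib_left sum_distrib_right mult_ac)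
  have R: "expval \<sigma> (tensv a (conjv b)) =
    (\<Sum>i\<in>UNIV. \<Sum>j\<in>UNIV. \<Sum>k\<in>UNIV. \<Sum>l\<in>UNIV. cnj (a i) * b j * \<sigma> (i, j) (k, l) * a k * cnj (b l))"
    by (simp add: expval_def sum_prod_UNIV sum_distrib_left sum_distrib_right conjv_def mult_ac)
  have X: "(\<Sum>j\<in>UNIV. \<Sum>k\<in>UNIV. \<Sum>l\<in>UNIV. cnj (a i) * b j * \<sigma> (i, j) (k, l) * a k * cnj (b l)) =
     (\<Sum>l\<in>UNIV. \<Sum>k\<in>UNIV. \<Sum>j\<in>UNIV. cnj (a i) * b j * \<sigma> (i, j) (k, l) * a k * cnj (b l))" for i
    by (rule swap3)
  show ?thesis unfolding L R X by (simp add: mult_ac)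
qed

lemma psd_pt_prod:
  fixes \<sigma> :: "('a::finite \<times> 'b::finite, 'a \<times> 'b) op"
  shows "psd \<sigma> \<Longrightarrow> 0 \<le> expval (partial_transpose \<sigma>) (tensv a b)"
  by (simp add: expval_pt_prod psd_def)

lemma expval_herm_real:
  fixes A :: "('x::finite, 'x) op"
  assumes "\<And>x y. A x y = cnj (A y x)"
  shows "Im (expval A v) = 0"
proof -
  have "cnj (expval A v) = (\<Sum>x\<in>UNIV. \<Sum>y\<in>UNIV. v x * A y x * cnj (v y))"
    unfolding expval_def cnj_sum by (simp add: assms[symmetric])
  also have "\<dots> = expval A v"
    unfolding expval_def by (subst sum.swap) (simp add: mult_ac)
  finally show ?thesis by (simp add: complex_eq_iff)
qed

lemma pt_herm:
  fixes \<sigma> :: "('a::finite \<times> 'b::finite, 'a \<times> 'b) op"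
  assumes "psd \<sigma>"
  shows "partial_transpose \<sigma> x y = cnj (partial_transpose \<sigma> y x)"
proof -
  obtain i j where x: "x = (i, j)" by (cases x)
  obtain k l where y: "y = (k, l)" by (cases y)
  show ?thesis using psd_herm[OF assms, of "(i,l)" "(k,j)"] by (simp add: x y)
qed

lemma conjop_id: "conjop id_op = id_op"
  by (intro ext) (simp add: conjop_def id_op_def)

lemma pt_sandwich_A:
  fixes \<rho> :: "('a::finite \<times> 'b::finite, 'a \<times> 'b) op"
  shows "partial_transpose (sandwich (tensor_op M id_op) \<rho>) = sandwich (tensor_op M id_op) (partial_transpose \<rho>)"
  using pt_sandwich[of M id_op \<rho>] by (simp add: conjop_id)

lemma compose_AB:
  fixes \<rho> :: "('a::finite \<times> 'b::finite, 'a \<times> 'b) op" and PA :: "(2, 'a) op" and PB :: "(2, 'b) op"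
  shows "sandwich (tensor_op PA PB) \<rho> = sandwich (tensor_op id_op PB) (sandwich (tensor_op PA id_op) \<rho>)"
  by (simp add: sandwich_sandwich mmul_tensor mmul_id_left mmul_id_right)

lemma app_lin2: "app A (\<lambda>p. c0 * x p + c1 * y p) = (\<lambda>p. c0 * app A x p + c1 * app A y p)"
  by (simp add: app_def distrib_left sum.distrib sum_distrib_left mult_ac)

definition sform :: "complex \<Rightarrow> complex \<Rightarrow> ('a \<Rightarrow> complex) \<Rightarrow> ('a \<Rightarrow> complex) \<Rightarrow> ('b \<Rightarrow> complex) \<Rightarrow> ('b \<Rightarrow> complex) \<Rightarrow> ('a \<times> 'b \<Rightarrow> complex)" where
  "sform c0 c1 a0 a1 b0 b1 = (\<lambda>p. c0 * tensv a0 b0 p + c1 * tensv a1 b1 p)"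

lemma app_sform: "app (tensor_op M N) (sform c0 c1 a0 a1 b0 b1) = sform c0 c1 (app M a0) (app M a1) (app N b0) (app N b1)"
  unfolding sform_def app_lin2 app_tensor ..

lemma app_id: "app id_op v = (v :: 'x::finite \<Rightarrow> complex)"
  by (intro ext) (simp add: app_def id_op_bvec(1))

lemma schmidt_sform: "(\<lambda>(i,j). \<Sum>t<(2::nat). complex_of_real (s t) * a t i * b t j) =
   sform (complex_of_real (s 0)) (complex_of_real (s 1)) (a 0) (a 1) (b 0) (b 1)"
  by (intro ext) (auto simp: sform_def sum_lt2 mult_ac)

lemma app_dag_proj2: "app (dag (proj2 a0 a1)) x = (\<lambda>z. x 0 * a0 z + x 1 * a1 z)"
  by (intro ext) (simp add: app_def dag_def proj2_def sum2 mult.commute)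

lemma app_proj2: "app (proj2 a0 a1) y = (\<lambda>i. if i = 0 then inner_c a0 y else inner_c a1 y)"
  by (intro ext) (simp add: app_def proj2_def inner_c_def)

lemma inner_dag_proj2:
  assumes "orthonormal2 a0 a1"
  shows "inner_c (app (dag (proj2 a0 a1)) x) (app (dag (proj2 a0 a1)) y) = inner_c x y"
proof -
  have o: "inner_c a0 a0 = 1" "inner_c a1 a1 = 1" "inner_c a0 a1 = 0" "inner_c a1 a0 = 0"
    using assms inner_cnj[of a1 a0] by (auto simp: orthonormal2_def)
  show ?thesis
    unfolding app_dag_proj2 inner_add_l inner_add_r inner_scale_l inner_scale_r o
    by (simp add: inner2)
qed

lemma proj2_bvec:
  assumes "orthonormal2 a0 a1"
  shows "app (proj2 a0 a1) a0 = bvec 0" "app (proj2 a0 a1) a1 = bvec 1"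
proof -
  have o: "inner_c a0 a0 = 1" "inner_c a1 a1 = 1" "inner_c a0 a1 = 0" "inner_c a1 a0 = 0"
    using assms inner_cnj[of a1 a0] by (auto simp: orthonormal2_def)
  show "app (proj2 a0 a1) a0 = bvec 0" "app (proj2 a0 a1) a1 = bvec 1"
    by (rule v2_eqI; simp add: app_proj2 o bvec_def)+
qed

lemma dag_proj2_bvec: "app (dag (proj2 a0 a1)) (bvec 0) = a0" "app (dag (proj2 a0 a1)) (bvec 1) = a1"
  by (simp_all add: app_dag_proj2 bvec_def)

lemma orth_conjv: "orthonormal2 a0 a1 \<Longrightarrow> orthonormal2 (conjv a0) (conjv a1)"
  by (simp add: orthonormal2_def inner_conjv)

lemma proj_proj2: "orthonormal2 a0 a1 \<Longrightarrow> is_projection (proj2 a0 a1)"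
  by (auto simp: is_projection_def)


lemma dag_id: "dag id_op = id_op"
  by (intro ext) (simp add: dag_def id_op_def)

lemma neg_not_nonneg: "(x::complex) < 0 \<Longrightarrow> \<not> 0 \<le> x"
  by (simp add: less_complex_def less_eq_complex_def)

lemma key_npt:
  fixes \<sigma> :: "(2 \<times> 'b::finite, 2 \<times> 'b) op"
  assumes p: "psd \<sigma>" and np: "\<not> psd (partial_transpose \<sigma>)"
  shows "\<exists>s a b. 0 < s 0 \<and> 0 < s (1::nat) \<and> orthonormal2 (a 0) (a (1::nat)) \<and> orthonormal2 (b 0) (b (1::nat)) \<and>
     expval (partial_transpose \<sigma>) (sform (complex_of_real (s 0)) (complex_of_real (s 1)) (a 0) (a 1) (b 0) (b 1)) < 0"
proof -
  obtain \<psi> where \<psi>: "\<not> 0 \<le> expval (partial_transpose \<sigma>) \<psi>" using np psd_def by blast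
  have im: "Im (expval (partial_transpose \<sigma>) \<psi>) = 0"
    by (rule expval_herm_real) (rule pt_herm[OF p])
  have neg: "expval (partial_transpose \<sigma>) \<psi> < 0"
    using \<psi> im by (auto simp: less_complex_def less_eq_complex_def)
  show ?thesis
  proof (cases "\<exists>a b. \<psi> = tensv a b")
    case True
    then obtain a b where "\<psi> = tensv a b" by blast
    then show ?thesis using psd_pt_prod[OF p, of a b] \<psi> by simp
  next
    case False
    then obtain s a b where h: "0 < s (0::nat)" "0 < s 1" "orthonormal2 (a 0) (a 1)" "orthonormal2 (b 0) (b 1)"
      "\<psi> = (\<lambda>(i,j). \<Sum>t<(2::nat). complex_of_real (s t) * a t i * b t j)"
      using schmidt2[of \<psi>] by blast
    show ?thesis using h neg unfolding schmidt_sform by blast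
  qed
qed

lemma i_to_ii:
  fixes \<rho> :: "('a::finite \<times> 'b::finite, 'a \<times> 'b) op" and PA :: "(2, 'a) op" and PB :: "(2, 'b) op"
  assumes ent: "entangled (sandwich (tensor_op PA PB) \<rho>)"
  shows "\<not> psd (partial_transpose (sandwich (tensor_op PA (id_op :: ('b,'b) op)) \<rho>))"
proof
  assume pt: "psd (partial_transpose (sandwich (tensor_op PA (id_op :: ('b,'b) op)) \<rho>))"
  define \<tau> where "\<tau> = sandwich (tensor_op PA PB) \<rho>"
  have p\<tau>: "psd \<tau>" using ent by (simp add: entangled_def \<tau>_def)
  have "partial_transpose \<tau> = partial_transpose (sandwich (tensor_op id_op PB) (sandwich (tensor_op PA id_op) \<rho>))"
    unfolding \<tau>_def by (rule arg_cong[OF compose_AB])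
  also have "\<dots> = sandwich (tensor_op id_op (conjop PB)) (partial_transpose (sandwich (tensor_op PA id_op) \<rho>))"
    by (rule pt_sandwich)
  finally have "partial_transpose \<tau> = sandwich (tensor_op id_op (conjop PB)) (partial_transpose (sandwich (tensor_op PA id_op) \<rho>))" .
  then have "psd (partial_transpose \<tau>)" using psd_sandwich[OF pt] by simp
  then have "separable \<tau>" using horodecki[OF p\<tau>] by simp
  then show False using ent by (simp add: entangled_def \<tau>_def)
qed

lemma ii_to_i:
  fixes \<rho> :: "('a::finite \<times> 'b::finite, 'a \<times> 'b) op" and PA :: "(2, 'a) op"
  assumes pr: "psd \<rho>" and np: "\<not> psd (partial_transpose (sandwich (tensor_op PA (id_op :: ('b,'b) op)) \<rho>))"
  shows "\<exists>PB :: (2, 'b) op. is_projection PB \<and> entangled (sandwich (tensor_op PA PB) \<rho>)"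
proof -
  define \<sigma> where "\<sigma> = sandwich (tensor_op PA (id_op :: ('b,'b) op)) \<rho>"
  have p\<sigma>: "psd \<sigma>" using psd_sandwich[OF pr] \<sigma>_def by simp
  obtain s a b where h: "0 < s 0" "0 < s (1::nat)" "orthonormal2 (a 0) (a (1::nat))" "orthonormal2 (b 0) (b (1::nat))"
    "expval (partial_transpose \<sigma>) (sform (complex_of_real (s 0)) (complex_of_real (s 1)) (a 0) (a 1) (b 0) (b 1)) < 0"
    using key_npt[OF p\<sigma> np[folded \<sigma>_def]] by blast
  define PB where "PB = proj2 (conjv (b 0)) (conjv (b 1))"
  have isp: "is_projection PB" unfolding PB_def by (intro proj_proj2 orth_conjv h(4))
  define \<tau> where "\<tau> = sandwich (tensor_op PA PB) \<rho>"
  have p\<tau>: "psd \<tau>" using psd_sandwich[OF pr] \<tau>_def by simp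
  have cPB: "conjop PB = proj2 (b 0) (b 1)"
    by (intro ext) (simp add: PB_def conjop_def proj2_def conjv_def)
  define T where "T = tensor_op (id_op :: (2,2) op) (conjop PB)"
  have "partial_transpose \<tau> = partial_transpose (sandwich (tensor_op id_op PB) \<sigma>)"
    unfolding \<tau>_def \<sigma>_def by (rule arg_cong[OF compose_AB])
  also have "\<dots> = sandwich T (partial_transpose \<sigma>)" unfolding T_def by (rule pt_sandwich)
  finally have pt\<tau>: "partial_transpose \<tau> = sandwich T (partial_transpose \<sigma>)" .
  define \<psi> where "\<psi> = sform (complex_of_real (s 0)) (complex_of_real (s 1)) (a 0) (a 1) (b 0) (b 1)"
  have "app (dag T) (app T \<psi>) = \<psi>"
    unfolding T_def dag_tensor \<psi>_def app_sform cPB dag_id app_id proj2_bvec[OF h(4)] dag_proj2_bvec ..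
  then have "expval (partial_transpose \<tau>) (app T \<psi>) = expval (partial_transpose \<sigma>) \<psi>"
    unfolding pt\<tau> expval_sandwich by simp
  then have "expval (partial_transpose \<tau>) (app T \<psi>) < 0" using h(5) \<psi>_def by simp
  then have "\<not> psd (partial_transpose \<tau>)" using neg_not_nonneg psd_def by blast
  then have "\<not> separable \<tau>" using sep_ppt by blast
  then show ?thesis using isp p\<tau> \<tau>_def entangled_def by blast
qed

lemma ii_to_iii:
  fixes \<rho> :: "('a::finite \<times> 'b::finite, 'a \<times> 'b) op" and PA :: "(2, 'a) op"
  assumes pr: "psd \<rho>" and pa: "is_projection PA"
    and np: "\<not> psd (partial_transpose (sandwich (tensor_op PA (id_op :: ('b,'b) op)) \<rho>))"
  shows "\<exists>\<phi>. schmidt_rank 2 \<phi> \<and> expval (partial_transpose \<rho>) \<phi> < 0"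
proof -
  obtain \<alpha>0 \<alpha>1 where al: "orthonormal2 \<alpha>0 \<alpha>1" "PA = proj2 \<alpha>0 \<alpha>1" using pa is_projection_def by blast
  define \<sigma> where "\<sigma> = sandwich (tensor_op PA (id_op :: ('b,'b) op)) \<rho>"
  have p\<sigma>: "psd \<sigma>" using psd_sandwich[OF pr] \<sigma>_def by simp
  obtain s a b where h: "0 < s 0" "0 < s (1::nat)" "orthonormal2 (a 0) (a (1::nat))" "orthonormal2 (b 0) (b (1::nat))"
    "expval (partial_transpose \<sigma>) (sform (complex_of_real (s 0)) (complex_of_real (s 1)) (a 0) (a 1) (b 0) (b 1)) < 0"
    using key_npt[OF p\<sigma> np[folded \<sigma>_def]] by blast
  define \<psi> where "\<psi> = sform (complex_of_real (s 0)) (complex_of_real (s 1)) (a 0) (a 1) (b 0) (b 1)"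
  define a' where "a' = (\<lambda>t. app (dag PA) (a t))"
  define \<phi> where "\<phi> = app (dag (tensor_op PA id_op)) \<psi>"
  have \<phi>: "\<phi> = sform (complex_of_real (s 0)) (complex_of_real (s 1)) (a' 0) (a' 1) (b 0) (b 1)"
    unfolding \<phi>_def \<psi>_def dag_tensor app_sform dag_id app_id a'_def ..
  have "expval (partial_transpose \<rho>) \<phi> = expval (partial_transpose \<sigma>) \<psi>"
    unfolding \<phi>_def \<sigma>_def pt_sandwich_A expval_sandwich ..
  then have neg: "expval (partial_transpose \<rho>) \<phi> < 0" using h(5) \<psi>_def by simp
  have ia: "inner_c (a' t) (a' t') = inner_c (a t) (a t')" for t t'
    unfolding a'_def al(2) by (rule inner_dag_proj2[OF al(1)])
  have on: "\<forall>t<2. \<forall>t'<2. inner_c (c t) (c t') = (if t = t' then 1 else 0)"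
    if "orthonormal2 (c 0) (c (1::nat))" for c :: "nat \<Rightarrow> 'x::finite \<Rightarrow> complex"
  proof (intro allI impI)
    fix t t' :: nat assume "t < 2" "t' < 2"
    then have "t = 0 \<or> t = 1" "t' = 0 \<or> t' = 1" by auto
    then show "inner_c (c t) (c t') = (if t = t' then 1 else 0)"
      using that inner_cnj[of "c 1" "c 0"] by (auto simp: orthonormal2_def)
  qed
  have "schmidt_rank 2 \<phi>"
    unfolding schmidt_rank_def
  proof (intro exI conjI)
    show "\<forall>t<2. 0 < s t" using h(1,2) by (auto simp: less_2_cases_iff)
    show "\<forall>t<2. \<forall>t'<2. inner_c (a' t) (a' t') = (if t = t' then 1 else 0)" unfolding ia by (rule on[OF h(3)])
    show "\<forall>t<2. \<forall>t'<2. inner_c (b t) (b t') = (if t = t' then 1 else 0)" by (rule on[OF h(4)])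
    show "\<phi> = (\<lambda>(i,j). \<Sum>t<2. complex_of_real (s t) * a' t i * b t j)" unfolding schmidt_sform \<phi> ..
  qed
  then show ?thesis using neg by blast
qed

lemma iii_to_ii:
  fixes \<rho> :: "('a::finite \<times> 'b::finite, 'a \<times> 'b) op"
  assumes sr: "schmidt_rank 2 \<phi>" and neg: "expval (partial_transpose \<rho>) \<phi> < 0"
  shows "\<exists>PA :: (2, 'a) op. is_projection PA \<and> \<not> psd (partial_transpose (sandwich (tensor_op PA (id_op :: ('b,'b) op)) \<rho>))"
proof -
  obtain s a b where h: "\<forall>t<2. 0 < s t" "\<forall>t<2. \<forall>t'<2. inner_c (a t) (a t') = (if t = t' then 1 else 0)"
    "\<forall>t<2. \<forall>t'<2. inner_c (b t) (b t') = (if t = t' then 1 else (0::complex))"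
    "\<phi> = (\<lambda>(i,j). \<Sum>t<(2::nat). complex_of_real (s t) * a t i * b t j)"
    using sr unfolding schmidt_rank_def by blast
  have oa: "orthonormal2 (a 0) (a 1)" using h(2) by (simp add: orthonormal2_def)
  define PA where "PA = proj2 (a 0) (a 1)"
  have isp: "is_projection PA" unfolding PA_def by (rule proj_proj2[OF oa])
  define \<sigma> where "\<sigma> = sandwich (tensor_op PA (id_op :: ('b,'b) op)) \<rho>"
  define \<psi> where "\<psi> = app (tensor_op PA (id_op :: ('b,'b) op)) \<phi>"
  have "app (dag (tensor_op PA id_op)) \<psi> = \<phi>"
    unfolding \<psi>_def h(4) schmidt_sform app_sform dag_tensor app_id dag_id PA_def proj2_bvec[OF oa] dag_proj2_bvec ..
  then have "expval (partial_transpose \<sigma>) \<psi> = expval (partial_transpose \<rho>) \<phi>"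
    unfolding \<sigma>_def pt_sandwich_A expval_sandwich by simp
  then have "\<not> psd (partial_transpose \<sigma>)" using neg neg_not_nonneg psd_def by metis
  then show ?thesis using isp \<sigma>_def by blast
qed


theorem lemma2:
  fixes \<rho> :: "('a::finite \<times> 'b::finite, 'a \<times> 'b) op"
  assumes "density_matrix \<rho>"
  shows "((\<exists>PA PB. is_projection (PA :: (2, 'a) op) \<and> is_projection (PB :: (2, 'b) op) \<and>
             entangled (sandwich (tensor_op PA PB) \<rho>))
          \<longleftrightarrow>
          (\<exists>PA. is_projection (PA :: (2, 'a) op) \<and>
             \<not> psd (partial_transpose (sandwich (tensor_op PA (id_op :: ('b, 'b) op)) \<rho>))))
       \<and>
         ((\<exists>PA. is_projection (PA :: (2, 'a) op) \<and>
             \<not> psd (partial_transpose (sandwich (tensor_op PA (id_op :: ('b, 'b) op)) \<rho>)))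
          \<longleftrightarrow>
          (\<exists>\<phi>. schmidt_rank 2 \<phi> \<and> expval (partial_transpose \<rho>) \<phi> < 0))"
proof -
  have pr: "psd \<rho>" using assms by (simp add: density_matrix_def)
  have A: "(\<exists>PA PB. is_projection (PA :: (2, 'a) op) \<and> is_projection (PB :: (2, 'b) op) \<and>
             entangled (sandwich (tensor_op PA PB) \<rho>))
          \<longleftrightarrow>
          (\<exists>PA. is_projection (PA :: (2, 'a) op) \<and>
             \<not> psd (partial_transpose (sandwich (tensor_op PA (id_op :: ('b, 'b) op)) \<rho>)))"
  proof
    assume "\<exists>PA PB. is_projection (PA :: (2, 'a) op) \<and> is_projection (PB :: (2, 'b) op) \<and>
             entangled (sandwich (tensor_op PA PB) \<rho>)"
    then obtain PA PB where h: "is_projection (PA :: (2, 'a) op)" "is_projection (PB :: (2, 'b) op)"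
      "entangled (sandwich (tensor_op PA PB) \<rho>)" by blast
    show "\<exists>PA. is_projection (PA :: (2, 'a) op) \<and>
             \<not> psd (partial_transpose (sandwich (tensor_op PA (id_op :: ('b, 'b) op)) \<rho>))"
      using h(1) i_to_ii[OF h(3)] by blast
  next
    assume "\<exists>PA. is_projection (PA :: (2, 'a) op) \<and>
             \<not> psd (partial_transpose (sandwich (tensor_op PA (id_op :: ('b, 'b) op)) \<rho>))"
    then obtain PA where h: "is_projection (PA :: (2, 'a) op)"
      "\<not> psd (partial_transpose (sandwich (tensor_op PA (id_op :: ('b, 'b) op)) \<rho>))" by blast
    show "\<exists>PA PB. is_projection (PA :: (2, 'a) op) \<and> is_projection (PB :: (2, 'b) op) \<and>
             entangled (sandwich (tensor_op PA PB) \<rho>)"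
      using h(1) ii_to_i[OF pr h(2)] by blast
  qed
  have B: "(\<exists>PA. is_projection (PA :: (2, 'a) op) \<and>
             \<not> psd (partial_transpose (sandwich (tensor_op PA (id_op :: ('b, 'b) op)) \<rho>)))
          \<longleftrightarrow>
          (\<exists>\<phi>. schmidt_rank 2 \<phi> \<and> expval (partial_transpose \<rho>) \<phi> < 0)"
  proof
    assume "\<exists>PA. is_projection (PA :: (2, 'a) op) \<and>
             \<not> psd (partial_transpose (sandwich (tensor_op PA (id_op :: ('b, 'b) op)) \<rho>))"
    then obtain PA where h: "is_projection (PA :: (2, 'a) op)"
      "\<not> psd (partial_transpose (sandwich (tensor_op PA (id_op :: ('b, 'b) op)) \<rho>))" by blast
    show "\<exists>\<phi>. schmidt_rank 2 \<phi> \<and> expval (partial_transpose \<rho>) \<phi> < 0"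
      using ii_to_iii[OF pr h(1) h(2)] .
  next
    assume "\<exists>\<phi>. schmidt_rank 2 \<phi> \<and> expval (partial_transpose \<rho>) \<phi> < 0"
    then obtain \<phi> where h: "schmidt_rank 2 \<phi>" "expval (partial_transpose \<rho>) \<phi> < 0" by blast
    show "\<exists>PA. is_projection (PA :: (2, 'a) op) \<and>
             \<not> psd (partial_transpose (sandwich (tensor_op PA (id_op :: ('b, 'b) op)) \<rho>))"
      using iii_to_ii[OF h] .
  qed
  show ?thesis using A B by blast
qed

end
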